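(* Let $n\ge1$ and let $f\in\mathcal{C}^{3}(\mathbb{B}^{n})$ satisfy $$\mathrm{Re}\Big\{\sum_{k=1}^{n}\big[\overline{f_{z_{k}}}(\Delta f)_{z_{k}}+\overline{f_{\overline{z}_{k}}}(\Delta f)_{\overline{z}_{k}}\big]\Big\}\ge0\quad\text{in }\mathbb{B}^n.$$ Then for every $\alpha\ge2$, the function $\|D_f\|^{\alpha}$ is subharmonic in $\mathbb{B}^n$.
   Context: $\mathbb{B}^n$ is the open unit ball of $\mathbb{C}^n$ (identified with $\mathbb{R}^{2n}$ for subharmonicity), $\Delta=4\sum_k\partial^2/\partial z_k\partial\overline{z}_k$, and $\|D_f\|=\big(\sum_{k=1}^n(|f_{z_k}|^2+|f_{\overline z_k}|^2)\big)^{1/2}$. *)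

theory Defs
  imports "HOL-Analysis.Analysis"
begin

text \<open>Points of the complex n-space are vectors z :: complex^'n (index type 'n finite,
  so n = CARD('n) \<ge> 1). As a real vector space this is R^(2n) with the Euclidean norm.\<close>

text \<open>C^k on a set S (intended for open S), via iterated real Frechet derivatives:
  C^0 = continuous; C^(k+1) = differentiable at every point of S with all
  directional derivatives x \<mapsto> g' x v being C^k.\<close>
primrec Ck_on :: "nat \<Rightarrow> 'a::real_normed_vector set \<Rightarrow> ('a \<Rightarrow> 'b::real_normed_vector) \<Rightarrow> bool" where
  "Ck_on 0 S g = continuous_on S g"
| "Ck_on (Suc k) S g =
     (\<exists>g'. (\<forall>x\<in>S. (g has_derivative g' x) (at x)) \<and> (\<forall>v. Ck_on k S (\<lambda>x. g' x v)))"

definition dirderiv :: "('a::real_normed_vector \<Rightarrow> 'b::real_normed_vector) \<Rightarrow> 'a \<Rightarrow> 'a \<Rightarrow> 'b" where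
  "dirderiv g v x = frechet_derivative g (at x) v"

text \<open>Wirtinger derivatives: z_k = x_k + i y_k,
  d/dz_k = (d/dx_k - i d/dy_k)/2,  d/dzbar_k = (d/dx_k + i d/dy_k)/2.\<close>
definition wz :: "'n::finite \<Rightarrow> (complex^'n \<Rightarrow> complex) \<Rightarrow> complex^'n \<Rightarrow> complex" where
  "wz k g z = (dirderiv g (axis k 1) z - \<i> * dirderiv g (axis k \<i>) z) / 2"

definition wzbar :: "'n::finite \<Rightarrow> (complex^'n \<Rightarrow> complex) \<Rightarrow> complex^'n \<Rightarrow> complex" where
  "wzbar k g z = (dirderiv g (axis k 1) z + \<i> * dirderiv g (axis k \<i>) z) / 2"

definition laplacian :: "(complex^'n::finite \<Rightarrow> complex) \<Rightarrow> complex^'n \<Rightarrow> complex" where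
  "laplacian g z = (\<Sum>k\<in>UNIV. 4 * wz k (wzbar k g) z)"

definition normD :: "(complex^'n::finite \<Rightarrow> complex) \<Rightarrow> complex^'n \<Rightarrow> real" where
  "normD g z = sqrt (\<Sum>k\<in>UNIV. (cmod (wz k g z))\<^sup>2 + (cmod (wzbar k g z))\<^sup>2)"

definition usc_on :: "'a::topological_space set \<Rightarrow> ('a \<Rightarrow> real) \<Rightarrow> bool" where
  "usc_on S u \<longleftrightarrow> (\<forall>x\<in>S. \<forall>c. u x < c \<longrightarrow> (\<forall>\<^sub>F y in at x within S. u y < c))"

definition subharmonic_on :: "'a::euclidean_space set \<Rightarrow> ('a \<Rightarrow> real) \<Rightarrow> bool" where
  "subharmonic_on S u \<longleftrightarrow> usc_on S u \<and>
     (\<forall>a\<in>S. \<exists>r0>0. \<forall>r. 0 < r \<and> r < r0 \<longrightarrow>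
        cball a r \<subseteq> S \<and> u integrable_on cball a r \<and>
        u a \<le> integral (cball a r) u / measure lebesgue (cball a r))"

end

theory Submission
  imports Defs
begin


lemma Ck_on_SucI: "(\<forall>x\<in>S. (g has_derivative g' x) (at x)) \<Longrightarrow> (\<forall>v. Ck_on k S (\<lambda>x. g' x v)) \<Longrightarrow> Ck_on (Suc k) S g"
  by auto

lemma Ck_on_SucE: assumes "Ck_on (Suc k) S g"
  obtains g' where "\<forall>x\<in>S. (g has_derivative g' x) (at x)" "\<forall>v. Ck_on k S (\<lambda>x. g' x v)"
  using assms by auto

declare Ck_on.simps(2)[simp del]

lemma dirderiv_cong:
  assumes "open S" "x \<in> S" "\<And>y. y \<in> S \<Longrightarrow> g y = h y"
  shows "dirderiv g v x = dirderiv h v x"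
proof -
  have "(g has_derivative D) (at x) = (h has_derivative D) (at x)" for D
    using has_derivative_transform_within_open[of g D x UNIV S h]
      has_derivative_transform_within_open[of h D x UNIV S g] assms by auto
  then show ?thesis unfolding dirderiv_def frechet_derivative_def by simp
qed

lemma dirderiv_eq: "(g has_derivative D) (at x) \<Longrightarrow> dirderiv g v x = D v"
  unfolding dirderiv_def by (metis frechet_derivative_at)

lemma Ck_on_cong:
  "open S \<Longrightarrow> (\<And>x. x\<in>S \<Longrightarrow> g x = h x) \<Longrightarrow> Ck_on k S g \<Longrightarrow> Ck_on k S h"
proof (induction k arbitrary: g h)
  case 0
  then show ?case using continuous_on_cong by (metis Ck_on.simps(1))
next
  case (Suc k)
  from Suc.prems(3) obtain g' where g': "\<forall>x\<in>S. (g has_derivative g' x) (at x)"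
    "\<forall>v. Ck_on k S (\<lambda>x. g' x v)" by (rule Ck_on_SucE)
  have "\<forall>x\<in>S. (h has_derivative g' x) (at x)"
    using g'(1) has_derivative_transform_within_open[of g _ _ UNIV S h] Suc.prems by blast
  with g'(2) show ?case by (blast intro: Ck_on_SucI)
qed

lemma Ck_on_Suc_D:
  assumes "Ck_on (Suc k) S g" "x \<in> S"
  shows "(g has_derivative (\<lambda>v. dirderiv g v x)) (at x)"
proof -
  obtain g' where g': "\<forall>x\<in>S. (g has_derivative g' x) (at x)" using Ck_on_SucE[OF assms(1)] by blast
  then have "(g has_derivative g' x) (at x)" using assms by auto
  moreover then have "(\<lambda>v. dirderiv g v x) = g' x" using dirderiv_eq by blast
  ultimately show ?thesis by simp
qed

lemma Ck_on_dir:
  assumes "open S" "Ck_on (Suc k) S g"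
  shows "Ck_on k S (dirderiv g v)"
proof -
  obtain g' where g': "\<forall>x\<in>S. (g has_derivative g' x) (at x)"
    "\<forall>v. Ck_on k S (\<lambda>x. g' x v)" using Ck_on_SucE[OF assms(2)] by blast
  show ?thesis
    by (rule Ck_on_cong[OF assms(1) _ g'(2)[rule_format, of v]]) (use g'(1) dirderiv_eq in metis)
qed

lemma Ck_on_mono: "Ck_on (Suc k) S g \<Longrightarrow> Ck_on k S g"
proof (induction k arbitrary: g)
  case 0
  then obtain g' where g': "\<forall>x\<in>S. (g has_derivative g' x) (at x)" by (rule Ck_on_SucE)
  then have "continuous_on S g"
    by (meson continuous_at_imp_continuous_on has_derivative_continuous)
  then show ?case by simp
next
  case (Suc k)
  from Suc.prems obtain g' where g': "\<forall>x\<in>S. (g has_derivative g' x) (at x)"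
    "\<forall>v. Ck_on (Suc k) S (\<lambda>x. g' x v)" by (rule Ck_on_SucE)
  then show ?case using Suc.IH by (intro Ck_on_SucI) auto
qed

lemma Ck_on_cont: "Ck_on k S g \<Longrightarrow> continuous_on S g"
proof (induction k arbitrary: g)
  case 0 then show ?case by simp
next
  case (Suc k) then show ?case using Ck_on_mono by blast
qed

lemma Ck_on_const: "Ck_on k S (\<lambda>x. c)"
proof (induction k arbitrary: c)
  case 0 then show ?case by simp
next
  case (Suc k)
  have "\<forall>x\<in>S. ((\<lambda>x. c) has_derivative (\<lambda>x v. 0) x) (at x)" by simp
  then show ?case using Suc.IH by (intro Ck_on_SucI[where g'="\<lambda>x v. 0"]) auto
qed

lemma Ck_on_add: "Ck_on k S g \<Longrightarrow> Ck_on k S h \<Longrightarrow> Ck_on k S (\<lambda>x. g x + h x)"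
proof (induction k arbitrary: g h)
  case 0 then show ?case by (auto intro: continuous_on_add)
next
  case (Suc k)
  from Suc.prems obtain g' h' where g': "\<forall>x\<in>S. (g has_derivative g' x) (at x)"
    "\<forall>v. Ck_on k S (\<lambda>x. g' x v)" and h': "\<forall>x\<in>S. (h has_derivative h' x) (at x)"
    "\<forall>v. Ck_on k S (\<lambda>x. h' x v)" by (metis Ck_on_SucE)
  have "\<forall>x\<in>S. ((\<lambda>x. g x + h x) has_derivative (\<lambda>x v. g' x v + h' x v) x) (at x)"
    using g' h' by (auto intro: has_derivative_add)
  moreover have "\<forall>v. Ck_on k S (\<lambda>x. g' x v + h' x v)" using Suc.IH g' h' by auto
  ultimately show ?case by (rule Ck_on_SucI)
qed

lemma Ck_on_linear:
  assumes "bounded_linear L" shows "Ck_on k S g \<Longrightarrow> Ck_on k S (\<lambda>x. L (g x))"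
proof (induction k arbitrary: g)
  case 0 then show ?case using assms
    by (auto intro: continuous_on_compose2[OF linear_continuous_on] simp: )
next
  case (Suc k)
  from Suc.prems obtain g' where g': "\<forall>x\<in>S. (g has_derivative g' x) (at x)"
    "\<forall>v. Ck_on k S (\<lambda>x. g' x v)" by (rule Ck_on_SucE)
  have "\<forall>x\<in>S. ((\<lambda>x. L (g x)) has_derivative (\<lambda>x v. L (g' x v)) x) (at x)"
    using g' bounded_linear.has_derivative[OF assms] by blast
  moreover have "\<forall>v. Ck_on k S (\<lambda>x. L (g' x v))" using Suc.IH g' by auto
  ultimately show ?case by (rule Ck_on_SucI)
qed

lemma Ck_on_mult:
  fixes g h :: "'a::real_normed_vector \<Rightarrow> 'b::real_normed_algebra"
  shows "Ck_on k S g \<Longrightarrow> Ck_on k S h \<Longrightarrow> Ck_on k S (\<lambda>x. g x * h x)"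
proof (induction k arbitrary: g h)
  case 0 then show ?case by (auto intro: continuous_on_mult)
next
  case (Suc k)
  from Suc.prems obtain g' h' where g': "\<forall>x\<in>S. (g has_derivative g' x) (at x)"
    "\<forall>v. Ck_on k S (\<lambda>x. g' x v)" and h': "\<forall>x\<in>S. (h has_derivative h' x) (at x)"
    "\<forall>v. Ck_on k S (\<lambda>x. h' x v)" by (metis Ck_on_SucE)
  have "\<forall>x\<in>S. ((\<lambda>x. g x * h x) has_derivative (\<lambda>x v. g x * h' x v + g' x v * h x) x) (at x)"
    using g' h' by (auto intro: has_derivative_mult)
  moreover have "\<forall>v. Ck_on k S (\<lambda>x. g x * h' x v + g' x v * h x)"
    using Suc.IH g' h' Ck_on_mono[OF Suc.prems(1)] Ck_on_mono[OF Suc.prems(2)] Ck_on_add by blast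
  ultimately show ?case by (rule Ck_on_SucI)
qed

lemma Ck_on_sum:
  "finite I \<Longrightarrow> (\<And>i. i \<in> I \<Longrightarrow> Ck_on k S (g i)) \<Longrightarrow> Ck_on k S (\<lambda>x. \<Sum>i\<in>I. g i x)"
  by (induction I rule: finite_induct) (auto intro: Ck_on_add Ck_on_const)

lemma line_deriv:
  fixes g :: "'a::real_normed_vector \<Rightarrow> real"
  assumes "(g has_derivative D) (at (x + s *\<^sub>R v))"
  shows "((\<lambda>s. g (x + s *\<^sub>R v)) has_real_derivative D v) (at s)"
proof -
  have l: "linear D" using has_derivative_linear[OF assms] .
  have "((\<lambda>s. x + s *\<^sub>R v) has_derivative (\<lambda>h. h *\<^sub>R v)) (at s)"
    by (auto intro!: derivative_eq_intros)
  from has_derivative_compose[OF this assms]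
  have "((\<lambda>s. g (x + s *\<^sub>R v)) has_derivative (\<lambda>h. D (h *\<^sub>R v))) (at s)" .
  moreover have "(\<lambda>h. D (h *\<^sub>R v)) = (\<lambda>h. D v * h)"
    using linear_cmul[OF l] by auto
  ultimately show ?thesis by (simp add: has_field_derivative_def)
qed

lemma schwarz_aux:
  fixes g :: "'a::real_normed_vector \<Rightarrow> real"
  assumes sub: "ball x \<delta> \<subseteq> S" and t: "t > 0" "t * (norm v + norm w) < \<delta>"
    and d0: "\<And>y. y\<in>S \<Longrightarrow> (g has_derivative (\<lambda>h. dirderiv g h y)) (at y)"
    and dv: "\<And>y. y\<in>S \<Longrightarrow> (dirderiv g v has_derivative (\<lambda>h. dirderiv (dirderiv g v) h y)) (at y)"
  shows "\<exists>\<xi>. dist \<xi> x < \<delta> \<and>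
    g (x + t *\<^sub>R v + t *\<^sub>R w) - g (x + t *\<^sub>R v) - g (x + t *\<^sub>R w) + g x
      = t\<^sup>2 * dirderiv (dirderiv g v) w \<xi>"
proof -
  have inS: "x + a *\<^sub>R v + b *\<^sub>R w \<in> S" if "0 \<le> a" "a \<le> t" "0 \<le> b" "b \<le> t" for a b
  proof -
    have "norm (a *\<^sub>R v + b *\<^sub>R w) \<le> a * norm v + b * norm w"
      using that by (smt (verit) norm_scaleR norm_triangle_ineq)
    also have "\<dots> \<le> t * (norm v + norm w)" using that
      by (simp add: add_mono distrib_left mult_right_mono)
    finally have "dist (x + a *\<^sub>R v + b *\<^sub>R w) x < \<delta>" using t by (simp add: dist_norm)
    then show ?thesis using sub by (auto simp: dist_commute)
  qed
  define \<phi> where "\<phi> s = g (x + s *\<^sub>R v + t *\<^sub>R w) - g (x + s *\<^sub>R v)" for s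
  have "(\<phi> has_real_derivative (dirderiv g v (x + s *\<^sub>R v + t *\<^sub>R w) - dirderiv g v (x + s *\<^sub>R v))) (at s)"
    if "0 \<le> s" "s \<le> t" for s
  proof -
    have a: "((\<lambda>s. g ((x + t *\<^sub>R w) + s *\<^sub>R v)) has_real_derivative dirderiv g v (x + s *\<^sub>R v + t *\<^sub>R w)) (at s)"
      using line_deriv[OF d0, of "(x + t *\<^sub>R w)" s v] inS[of s t] that t
      by (simp add: algebra_simps)
    have b: "((\<lambda>s. g (x + s *\<^sub>R v)) has_real_derivative dirderiv g v (x + s *\<^sub>R v)) (at s)"
      using line_deriv[OF d0, of x s v] inS[of s 0] that t by (simp add: algebra_simps)
    show ?thesis unfolding \<phi>_def using DERIV_diff[OF a b] by (simp add: algebra_simps)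
  qed
  from MVT2[OF t(1) this] obtain s1 where s1: "0 < s1" "s1 < t"
    "\<phi> t - \<phi> 0 = t * (dirderiv g v (x + s1 *\<^sub>R v + t *\<^sub>R w) - dirderiv g v (x + s1 *\<^sub>R v))"
    by auto
  define \<psi> where "\<psi> \<sigma> = dirderiv g v ((x + s1 *\<^sub>R v) + \<sigma> *\<^sub>R w)" for \<sigma>
  have "(\<psi> has_real_derivative dirderiv (dirderiv g v) w (x + s1 *\<^sub>R v + \<sigma> *\<^sub>R w)) (at \<sigma>)"
    if "0 \<le> \<sigma>" "\<sigma> \<le> t" for \<sigma>
    unfolding \<psi>_def using line_deriv[OF dv, of "x + s1 *\<^sub>R v" \<sigma> w] inS[of s1 \<sigma>] that s1
    by simp
  from MVT2[OF t(1) this] obtain \<sigma>1 where \<sigma>1: "0 < \<sigma>1" "\<sigma>1 < t"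
    "\<psi> t - \<psi> 0 = t * dirderiv (dirderiv g v) w (x + s1 *\<^sub>R v + \<sigma>1 *\<^sub>R w)" by auto
  have "dist (x + s1 *\<^sub>R v + \<sigma>1 *\<^sub>R w) x < \<delta>"
  proof -
    have "norm (s1 *\<^sub>R v + \<sigma>1 *\<^sub>R w) \<le> s1 * norm v + \<sigma>1 * norm w"
      using s1 \<sigma>1 by (smt (verit) norm_scaleR norm_triangle_ineq)
    also have "\<dots> \<le> t * (norm v + norm w)" using s1 \<sigma>1
      by (simp add: add_mono distrib_left mult_right_mono)
    finally show ?thesis using t by (simp add: dist_norm)
  qed
  moreover have "g (x + t *\<^sub>R v + t *\<^sub>R w) - g (x + t *\<^sub>R v) - g (x + t *\<^sub>R w) + g x
      = t\<^sup>2 * dirderiv (dirderiv g v) w (x + s1 *\<^sub>R v + \<sigma>1 *\<^sub>R w)"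
    using s1(3) \<sigma>1(3) unfolding \<phi>_def \<psi>_def by (simp add: power2_eq_square algebra_simps)
  ultimately show ?thesis by blast
qed

lemma schwarz_real:
  fixes g :: "'a::real_normed_vector \<Rightarrow> real"
  assumes S: "open S" "x \<in> S"
    and d0: "\<And>y. y\<in>S \<Longrightarrow> (g has_derivative (\<lambda>h. dirderiv g h y)) (at y)"
    and dv: "\<And>y. y\<in>S \<Longrightarrow> (dirderiv g v has_derivative (\<lambda>h. dirderiv (dirderiv g v) h y)) (at y)"
    and dw: "\<And>y. y\<in>S \<Longrightarrow> (dirderiv g w has_derivative (\<lambda>h. dirderiv (dirderiv g w) h y)) (at y)"
    and cv: "continuous_on S (dirderiv (dirderiv g v) w)"
    and cw: "continuous_on S (dirderiv (dirderiv g w) v)"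
  shows "dirderiv (dirderiv g v) w x = dirderiv (dirderiv g w) v x"
proof -
  let ?A = "dirderiv (dirderiv g v) w x" and ?B = "dirderiv (dirderiv g w) v x"
  have *: "\<bar>?A - ?B\<bar> < 2 * e" if e: "e > 0" for e
  proof -
    obtain d0 where d0p: "d0 > 0" "ball x d0 \<subseteq> S" using S open_contains_ball by blast
    have "continuous (at x) (dirderiv (dirderiv g v) w)"
      using cv S continuous_on_eq_continuous_at by blast
    then obtain d1 where d1: "d1 > 0" "\<And>y. dist y x < d1 \<Longrightarrow> dist (dirderiv (dirderiv g v) w y) ?A < e"
      using e unfolding continuous_at_eps_delta by blast
    have "continuous (at x) (dirderiv (dirderiv g w) v)"
      using cw S continuous_on_eq_continuous_at by blast
    then obtain d2 where d2: "d2 > 0" "\<And>y. dist y x < d2 \<Longrightarrow> dist (dirderiv (dirderiv g w) v y) ?B < e"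
      using e unfolding continuous_at_eps_delta by blast
    define \<delta> where "\<delta> = min d0 (min d1 d2)"
    have \<delta>: "\<delta> > 0" "ball x \<delta> \<subseteq> S" using d0p d1 d2 by (auto simp: \<delta>_def)
    define t where "t = (\<delta> / 2) / (norm v + norm w + 1)"
    have t: "t > 0" "t * (norm v + norm w) < \<delta>"
    proof -
      have p: "norm v + norm w + 1 > 0" by (smt (verit) norm_ge_zero)
      show "t > 0" using \<delta> p by (simp add: t_def)
      have "t * (norm v + norm w) \<le> t * (norm v + norm w + 1)" using \<open>t > 0\<close> by simp
      also have "\<dots> = \<delta> / 2" using p unfolding t_def by (simp add: divide_simps)
      finally show "t * (norm v + norm w) < \<delta>" using \<delta> by simp
    qed
    obtain \<xi> where \<xi>: "dist \<xi> x < \<delta>" "g (x + t *\<^sub>R v + t *\<^sub>R w) - g (x + t *\<^sub>R v) - g (x + t *\<^sub>R w) + g x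
      = t\<^sup>2 * dirderiv (dirderiv g v) w \<xi>"
      using schwarz_aux[OF \<delta>(2) t d0 dv] by blast
    have t2: "t * (norm w + norm v) < \<delta>" using t by (simp add: add.commute)
    obtain \<eta> where \<eta>: "dist \<eta> x < \<delta>" "g (x + t *\<^sub>R w + t *\<^sub>R v) - g (x + t *\<^sub>R w) - g (x + t *\<^sub>R v) + g x
      = t\<^sup>2 * dirderiv (dirderiv g w) v \<eta>"
      using schwarz_aux[OF \<delta>(2) t(1) t2 d0 dw] by blast
    have eq: "dirderiv (dirderiv g v) w \<xi> = dirderiv (dirderiv g w) v \<eta>"
      using \<xi>(2) \<eta>(2) t(1) by (simp add: algebra_simps)
    have "dist (dirderiv (dirderiv g v) w \<xi>) ?A < e" using d1 \<xi>(1) by (auto simp: \<delta>_def)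
    moreover have "dist (dirderiv (dirderiv g w) v \<eta>) ?B < e" using d2 \<eta>(1) by (auto simp: \<delta>_def)
    ultimately show ?thesis using eq by (simp add: dist_real_def)
  qed
  show ?thesis
  proof (rule ccontr)
    assume "?A \<noteq> ?B"
    then have "\<bar>?A - ?B\<bar> / 2 > 0" by simp
    from *[OF this] show False by simp
  qed
qed


lemma Ck_diff: "Ck_on (Suc k) S g \<Longrightarrow> x \<in> S \<Longrightarrow> g differentiable (at x)"
  using Ck_on_Suc_D differentiable_def by blast

lemma dirderiv_lin:
  assumes "bounded_linear L" "g differentiable (at x)"
  shows "dirderiv (\<lambda>y. L (g y)) v x = L (dirderiv g v x)"
proof -
  have d: "(g has_derivative frechet_derivative g (at x)) (at x)" using assms(2) frechet_derivative_works by blast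
  have "((\<lambda>y. L (g y)) has_derivative (\<lambda>v. L (frechet_derivative g (at x) v))) (at x)"
    using bounded_linear.has_derivative[OF assms(1) d] .
  then show ?thesis using dirderiv_eq by (simp add: dirderiv_def)
qed

lemma dirderiv_sum:
  assumes "finite I" "\<And>i. i \<in> I \<Longrightarrow> h i differentiable (at x)"
  shows "dirderiv (\<lambda>y. \<Sum>i\<in>I. h i y) v x = (\<Sum>i\<in>I. dirderiv (h i) v x)"
proof -
  have "((\<lambda>y. \<Sum>i\<in>I. h i y) has_derivative (\<lambda>v. \<Sum>i\<in>I. frechet_derivative (h i) (at x) v)) (at x)"
    using assms by (intro has_derivative_sum) (auto simp: frechet_derivative_works)
  then show ?thesis using dirderiv_eq by (simp add: dirderiv_def)
qed

lemma dirderiv_mult: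
  fixes g h :: "'a::real_normed_vector \<Rightarrow> 'b::real_normed_algebra"
  assumes "g differentiable (at x)" "h differentiable (at x)"
  shows "dirderiv (\<lambda>y. g y * h y) v x = g x * dirderiv h v x + dirderiv g v x * h x"
proof -
  have "((\<lambda>y. g y * h y) has_derivative (\<lambda>v. g x * frechet_derivative h (at x) v + frechet_derivative g (at x) v * h x)) (at x)"
    using assms by (intro has_derivative_mult) (auto simp: frechet_derivative_works)
  then show ?thesis using dirderiv_eq by (simp add: dirderiv_def)
qed

lemma dd_lin2:
  assumes "open S" "Ck_on 2 S g" "x \<in> S" "bounded_linear L"
  shows "dirderiv (dirderiv (\<lambda>y. L (g y)) v) w x = L (dirderiv (dirderiv g v) w x)"
proof -
  have eq: "dirderiv (\<lambda>y. L (g y)) v y = L (dirderiv g v y)" if "y \<in> S" for y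
    using dirderiv_lin[OF assms(4) Ck_diff[OF assms(2)[unfolded numeral_2_eq_2] that]] .
  have "dirderiv (dirderiv (\<lambda>y. L (g y)) v) w x = dirderiv (\<lambda>y. L (dirderiv g v y)) w x"
    by (rule dirderiv_cong[OF assms(1,3) eq])
  also have "\<dots> = L (dirderiv (dirderiv g v) w x)"
    using dirderiv_lin[OF assms(4) Ck_diff[OF Ck_on_dir[OF assms(1) assms(2)[unfolded numeral_2_eq_2]] assms(3)]] .
  finally show ?thesis .
qed

lemma schwarz_Ck_real:
  fixes g :: "'a::real_normed_vector \<Rightarrow> real"
  assumes "open S" "Ck_on 2 S g" "x \<in> S"
  shows "dirderiv (dirderiv g v) w x = dirderiv (dirderiv g w) v x"
proof -
  have g2: "Ck_on (Suc (Suc 0)) S g" using assms(2) by (simp add: numeral_2_eq_2)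
  have c1: "Ck_on (Suc 0) S (dirderiv g u)" for u using Ck_on_dir[OF assms(1) g2] .
  show ?thesis
  proof (rule schwarz_real[OF assms(1,3)])
    show "\<And>y. y \<in> S \<Longrightarrow> (g has_derivative (\<lambda>h. dirderiv g h y)) (at y)" using Ck_on_Suc_D[OF g2] .
    show "\<And>y. y \<in> S \<Longrightarrow> (dirderiv g v has_derivative (\<lambda>h. dirderiv (dirderiv g v) h y)) (at y)"
      using Ck_on_Suc_D[OF c1] .
    show "\<And>y. y \<in> S \<Longrightarrow> (dirderiv g w has_derivative (\<lambda>h. dirderiv (dirderiv g w) h y)) (at y)"
      using Ck_on_Suc_D[OF c1] .
    show "continuous_on S (dirderiv (dirderiv g v) w)" "continuous_on S (dirderiv (dirderiv g w) v)"
      using Ck_on_cont Ck_on_dir[OF assms(1) c1] by blast+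
  qed
qed

lemma schwarz_Ck:
  fixes g :: "'a::real_normed_vector \<Rightarrow> complex"
  assumes "open S" "Ck_on 2 S g" "x \<in> S"
  shows "dirderiv (dirderiv g v) w x = dirderiv (dirderiv g w) v x"
proof (rule complex_eqI)
  have r: "Ck_on 2 S (\<lambda>y. Re (g y))" "Ck_on 2 S (\<lambda>y. Im (g y))"
    using Ck_on_linear[OF bounded_linear_Re] Ck_on_linear[OF bounded_linear_Im] assms(2) by auto
  show "Re (dirderiv (dirderiv g v) w x) = Re (dirderiv (dirderiv g w) v x)"
    using schwarz_Ck_real[OF assms(1) r(1) assms(3)] dd_lin2[OF assms bounded_linear_Re] by metis
  show "Im (dirderiv (dirderiv g v) w x) = Im (dirderiv (dirderiv g w) v x)"
    using schwarz_Ck_real[OF assms(1) r(2) assms(3)] dd_lin2[OF assms bounded_linear_Im] by metis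
qed

lemma dd_sum:
  assumes "open S" "finite I" "\<And>i. i \<in> I \<Longrightarrow> Ck_on 2 S (h i)" "x \<in> S"
  shows "dirderiv (dirderiv (\<lambda>y. \<Sum>i\<in>I. h i y) v) w x = (\<Sum>i\<in>I. dirderiv (dirderiv (h i) v) w x)"
proof -
  have h2: "Ck_on (Suc (Suc 0)) S (h i)" if "i \<in> I" for i using assms(3)[OF that] by (simp add: numeral_2_eq_2)
  have eq: "dirderiv (\<lambda>y. \<Sum>i\<in>I. h i y) v y = (\<Sum>i\<in>I. dirderiv (h i) v y)" if "y \<in> S" for y
    by (rule dirderiv_sum[OF assms(2)]) (rule Ck_diff[OF h2 that], assumption)
  have "dirderiv (dirderiv (\<lambda>y. \<Sum>i\<in>I. h i y) v) w x = dirderiv (\<lambda>y. \<Sum>i\<in>I. dirderiv (h i) v y) w x"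
    by (rule dirderiv_cong[OF assms(1,4) eq])
  also have "\<dots> = (\<Sum>i\<in>I. dirderiv (dirderiv (h i) v) w x)"
    by (rule dirderiv_sum[OF assms(2)]) (rule Ck_diff[OF Ck_on_dir[OF assms(1) h2] assms(4)], assumption)
  finally show ?thesis .
qed

lemma dd_sq:
  fixes P :: "'a::real_normed_vector \<Rightarrow> real"
  assumes "open S" "Ck_on 2 S P" "x \<in> S"
  shows "dirderiv (dirderiv (\<lambda>y. (P y)\<^sup>2) c) c x = 2 * (dirderiv P c x)\<^sup>2 + 2 * (P x * dirderiv (dirderiv P c) c x)"
proof -
  have p2: "Ck_on (Suc (Suc 0)) S P" using assms(2) by (simp add: numeral_2_eq_2)
  have eq: "dirderiv (\<lambda>y. (P y)\<^sup>2) c y = 2 * (P y * dirderiv P c y)" if "y \<in> S" for y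
    using dirderiv_mult[OF Ck_diff[OF p2 that] Ck_diff[OF p2 that], of c]
    by (simp add: power2_eq_square algebra_simps)
  have "dirderiv (dirderiv (\<lambda>y. (P y)\<^sup>2) c) c x = dirderiv (\<lambda>y. 2 * (P y * dirderiv P c y)) c x"
    by (rule dirderiv_cong[OF assms(1,3) eq])
  also have "\<dots> = 2 * dirderiv (\<lambda>y. P y * dirderiv P c y) c x"
  proof -
    have bl: "bounded_linear (\<lambda>z::real. 2 * z)" by (rule bounded_linear_mult_right)
    have dp: "(\<lambda>y. P y * dirderiv P c y) differentiable (at x)"
      using differentiable_mult[OF Ck_diff[OF p2 assms(3)] Ck_diff[OF Ck_on_dir[OF assms(1) p2] assms(3)]] .
    show ?thesis using dirderiv_lin[OF bl dp] .
  qed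
  also have "\<dots> = 2 * (P x * dirderiv (dirderiv P c) c x + dirderiv P c x * dirderiv P c x)"
    using dirderiv_mult[OF Ck_diff[OF p2 assms(3)] Ck_diff[OF Ck_on_dir[OF assms(1) p2] assms(3)]] by simp
  finally show ?thesis by (simp add: power2_eq_square algebra_simps)
qed


lemma dd_add:
  assumes "open S" "Ck_on 2 S g" "Ck_on 2 S h" "x \<in> S"
  shows "dirderiv (dirderiv (\<lambda>y. g y + h y) v) w x = dirderiv (dirderiv g v) w x + dirderiv (dirderiv h v) w x"
proof -
  let ?k = "\<lambda>i. if i then g else h"
  have "dirderiv (dirderiv (\<lambda>y. \<Sum>i\<in>{True,False}. ?k i y) v) w x = (\<Sum>i\<in>{True,False}. dirderiv (dirderiv (?k i) v) w x)"
    by (rule dd_sum) (use assms in auto)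
  then show ?thesis by simp
qed

lemma third_swap:
  fixes f :: "'a::real_normed_vector \<Rightarrow> complex"
  assumes S: "open S" and f3: "Ck_on 3 S f" and x: "x \<in> S"
  shows "dirderiv (dirderiv (dirderiv f b) c) c x = dirderiv (dirderiv (dirderiv f c) c) b x"
proof -
  have f3': "Ck_on (Suc 2) S f" using f3 by simp
  have f2: "Ck_on 2 S f" using Ck_on_mono[OF f3'] .
  have "dirderiv (dirderiv f b) c y = dirderiv (dirderiv f c) b y" if "y \<in> S" for y
    using schwarz_Ck[OF S f2 that] .
  then have "dirderiv (dirderiv (dirderiv f b) c) c x = dirderiv (dirderiv (dirderiv f c) b) c x"
    using dirderiv_cong[OF S x] by blast
  also have "\<dots> = dirderiv (dirderiv (dirderiv f c) c) b x"
    using schwarz_Ck[OF S Ck_on_dir[OF S f3'] x] .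
  finally show ?thesis .
qed

lemma lap_U:
  fixes f :: "'a::euclidean_space \<Rightarrow> complex"
  assumes S: "open S" and f3: "Ck_on 3 S f" and x: "x \<in> S"
  shows "(\<Sum>c\<in>Basis. dirderiv (dirderiv (\<lambda>z. \<Sum>b\<in>Basis. (Re (dirderiv f b z))\<^sup>2 + (Im (dirderiv f b z))\<^sup>2) c) c x)
    = 2 * (\<Sum>b\<in>Basis. \<Sum>c\<in>Basis. (cmod (dirderiv (dirderiv f b) c x))\<^sup>2)
      + 2 * (\<Sum>b\<in>Basis. Re (cnj (dirderiv f b x) * dirderiv (\<lambda>z. \<Sum>c\<in>Basis. dirderiv (dirderiv f c) c z) b x))"
proof -
  have f3': "Ck_on (Suc 2) S f" using f3 by simp
  have \<phi>2: "Ck_on 2 S (dirderiv f b)" for b using Ck_on_dir[OF S f3'] .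
  have \<phi>2': "Ck_on (Suc (Suc 0)) S (dirderiv f b)" for b using \<phi>2 by (simp add: numeral_2_eq_2)
  have P2: "Ck_on 2 S (\<lambda>z. Re (dirderiv f b z))" "Ck_on 2 S (\<lambda>z. Im (dirderiv f b z))" for b
    using Ck_on_linear[OF bounded_linear_Re \<phi>2] Ck_on_linear[OF bounded_linear_Im \<phi>2] by auto
  have sq: "Ck_on 2 S (\<lambda>z. (g z)\<^sup>2)" if "Ck_on 2 S g" for g :: "'a \<Rightarrow> real"
    using Ck_on_mult[OF that that] by (simp add: power2_eq_square)
  have term2: "Ck_on 2 S (\<lambda>z. (Re (dirderiv f b z))\<^sup>2 + (Im (dirderiv f b z))\<^sup>2)" for b
    using Ck_on_add[OF sq[OF P2(1)] sq[OF P2(2)]] .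
  have each: "dirderiv (dirderiv (\<lambda>z. (Re (dirderiv f b z))\<^sup>2 + (Im (dirderiv f b z))\<^sup>2) c) c x
     = 2 * (cmod (dirderiv (dirderiv f b) c x))\<^sup>2 + 2 * Re (cnj (dirderiv f b x) * dirderiv (dirderiv (dirderiv f b) c) c x)"
    for b c
  proof -
    have d1: "dirderiv (\<lambda>z. Re (dirderiv f b z)) c x = Re (dirderiv (dirderiv f b) c x)"
      "dirderiv (\<lambda>z. Im (dirderiv f b z)) c x = Im (dirderiv (dirderiv f b) c x)"
      using dirderiv_lin[OF bounded_linear_Re Ck_diff[OF \<phi>2' x]]
        dirderiv_lin[OF bounded_linear_Im Ck_diff[OF \<phi>2' x]] by auto
    have d2: "dirderiv (dirderiv (\<lambda>z. Re (dirderiv f b z)) c) c x = Re (dirderiv (dirderiv (dirderiv f b) c) c x)"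
      "dirderiv (dirderiv (\<lambda>z. Im (dirderiv f b z)) c) c x = Im (dirderiv (dirderiv (dirderiv f b) c) c x)"
      using dd_lin2[OF S \<phi>2 x bounded_linear_Re] dd_lin2[OF S \<phi>2 x bounded_linear_Im] by auto
    show ?thesis
      unfolding dd_add[OF S sq[OF P2(1)] sq[OF P2(2)] x] dd_sq[OF S P2(1) x] dd_sq[OF S P2(2) x] d1 d2
      by (simp add: cmod_power2 algebra_simps)
  qed
  have inner: "(\<Sum>c\<in>Basis. dirderiv (dirderiv (dirderiv f b) c) c x) = dirderiv (\<lambda>z. \<Sum>c\<in>Basis. dirderiv (dirderiv f c) c z) b x" for b
  proof -
    have "(\<Sum>c\<in>Basis. dirderiv (dirderiv (dirderiv f b) c) c x) = (\<Sum>c\<in>Basis. dirderiv (dirderiv (dirderiv f c) c) b x)"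
      using third_swap[OF S f3 x] by simp
    also have "\<dots> = dirderiv (\<lambda>z. \<Sum>c\<in>Basis. dirderiv (dirderiv f c) c z) b x"
      by (rule dirderiv_sum[symmetric]) (use Ck_diff[OF Ck_on_dir[OF S \<phi>2'] x] in auto)
    finally show ?thesis .
  qed
  have "(\<Sum>c\<in>Basis. dirderiv (dirderiv (\<lambda>z. \<Sum>b\<in>Basis. (Re (dirderiv f b z))\<^sup>2 + (Im (dirderiv f b z))\<^sup>2) c) c x)
     = (\<Sum>c\<in>Basis. \<Sum>b\<in>Basis. dirderiv (dirderiv (\<lambda>z. (Re (dirderiv f b z))\<^sup>2 + (Im (dirderiv f b z))\<^sup>2) c) c x)"
    by (rule sum.cong[OF refl], rule dd_sum) (use S term2 x in auto)
  also have "\<dots> = (\<Sum>c\<in>Basis. \<Sum>b\<in>Basis. 2 * (cmod (dirderiv (dirderiv f b) c x))\<^sup>2 + 2 * Re (cnj (dirderiv f b x) * dirderiv (dirderiv (dirderiv f b) c) c x))"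
    using each by simp
  also have "\<dots> = 2 * (\<Sum>b\<in>Basis. \<Sum>c\<in>Basis. (cmod (dirderiv (dirderiv f b) c x))\<^sup>2)
      + 2 * (\<Sum>b\<in>Basis. Re (cnj (dirderiv f b x) * (\<Sum>c\<in>Basis. dirderiv (dirderiv (dirderiv f b) c) c x)))"
  proof -
    have "(\<Sum>c\<in>Basis. \<Sum>b\<in>Basis. 2 * (cmod (dirderiv (dirderiv f b) c x))\<^sup>2 + 2 * Re (cnj (dirderiv f b x) * dirderiv (dirderiv (dirderiv f b) c) c x))
       = (\<Sum>b\<in>Basis. \<Sum>c\<in>Basis. 2 * (cmod (dirderiv (dirderiv f b) c x))\<^sup>2 + 2 * Re (cnj (dirderiv f b x) * dirderiv (dirderiv (dirderiv f b) c) c x))"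
      by (rule sum.swap)
    also have "\<dots> = (\<Sum>b\<in>Basis. 2 * (\<Sum>c\<in>Basis. (cmod (dirderiv (dirderiv f b) c x))\<^sup>2) + 2 * Re (cnj (dirderiv f b x) * (\<Sum>c\<in>Basis. dirderiv (dirderiv (dirderiv f b) c) c x)))"
      by (simp only: sum.distrib sum_distrib_left Re_sum)
    also have "\<dots> = 2 * (\<Sum>b\<in>Basis. \<Sum>c\<in>Basis. (cmod (dirderiv (dirderiv f b) c x))\<^sup>2)
      + 2 * (\<Sum>b\<in>Basis. Re (cnj (dirderiv f b x) * (\<Sum>c\<in>Basis. dirderiv (dirderiv (dirderiv f b) c) c x)))"
      by (simp only: sum.distrib sum_distrib_left)
    finally show ?thesis .
  qed
  also have "\<dots> = 2 * (\<Sum>b\<in>Basis. \<Sum>c\<in>Basis. (cmod (dirderiv (dirderiv f b) c x))\<^sup>2)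
      + 2 * (\<Sum>b\<in>Basis. Re (cnj (dirderiv f b x) * dirderiv (\<lambda>z. \<Sum>c\<in>Basis. dirderiv (dirderiv f c) c z) b x))"
    using inner by simp
  finally show ?thesis by simp
qed


lemma sum_Basis_cvec:
  "(\<Sum>b\<in>(Basis::(complex^'n::finite) set). F b) = (\<Sum>k\<in>UNIV. F (axis k 1) + F (axis k \<i>))"
proof -
  have B: "(Basis::(complex^'n) set) = (\<lambda>(k,u). axis k u) ` (UNIV \<times> {1, \<i>})"
    by (auto simp: Basis_vec_def Basis_complex_def)
  have inj: "inj_on (\<lambda>(k,u). axis k u :: complex^'n) (UNIV \<times> {1, \<i>})"
    by (auto simp: inj_on_def axis_eq_axis)
  have "(\<Sum>b\<in>(Basis::(complex^'n) set). F b) = (\<Sum>p\<in>UNIV \<times> {1, \<i>}. F ((\<lambda>(k,u). axis k u) p))"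
    unfolding B by (rule sum.reindex[OF inj, unfolded comp_def])
  also have "\<dots> = (\<Sum>(k,u)\<in>UNIV \<times> {1, \<i>}. F (axis k u))"
    by (rule sum.cong) auto
  also have "\<dots> = (\<Sum>k\<in>UNIV. \<Sum>u\<in>{1, \<i>}. F (axis k u))"
    by (rule sum.cartesian_product[symmetric])
  also have "\<dots> = (\<Sum>k\<in>UNIV. F (axis k 1) + F (axis k \<i>))"
    by (simp add: complex_eq_iff)
  finally show ?thesis .
qed

lemma dirderiv_comb:
  fixes A B :: "'a::real_normed_vector \<Rightarrow> complex"
  assumes "A differentiable (at x)" "B differentiable (at x)"
  shows "dirderiv (\<lambda>z. (A z + c * B z) / 2) v x = (dirderiv A v x + c * dirderiv B v x) / 2"
proof -
  have "((\<lambda>z. (A z + c * B z) / 2) has_derivative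
     (\<lambda>h. (frechet_derivative A (at x) h + c * frechet_derivative B (at x) h) / 2)) (at x)"
    using assms by (auto simp: frechet_derivative_works intro!: derivative_eq_intros)
  then have "dirderiv (\<lambda>z. (A z + c * B z) / 2) v x = (frechet_derivative A (at x) v + c * frechet_derivative B (at x) v) / 2"
    by (rule dirderiv_eq)
  then show ?thesis by (simp add: dirderiv_def)
qed

lemma alg_hyp:
  fixes a b A B :: complex
  shows "cnj ((a - \<i> * b) / 2) * ((A - \<i> * B) / 2) + cnj ((a + \<i> * b) / 2) * ((A + \<i> * B) / 2)
    = (cnj a * A + cnj b * B) / 2"
  by (simp add: complex_eq_iff field_simps)

lemma alg_norm:
  fixes a b :: complex
  shows "(cmod ((a - \<i> * b) / 2))\<^sup>2 + (cmod ((a + \<i> * b) / 2))\<^sup>2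
    = ((Re a)\<^sup>2 + (Im a)\<^sup>2 + ((Re b)\<^sup>2 + (Im b)\<^sup>2)) / 2"
  unfolding cmod_power2 by (simp add: power2_eq_square field_simps)


lemma ibp_line:
  fixes F F' :: "'a::euclidean_space \<Rightarrow> real"
  assumes Fint: "F integrable_on UNIV"
    and bK: "bounded K" and supp: "\<And>x. x \<notin> K \<Longrightarrow> F x = 0"
    and lip: "\<And>x t. 0 < t \<Longrightarrow> t \<le> 1 \<Longrightarrow> \<bar>F (x + t *\<^sub>R b) - F x\<bar> \<le> M * t"
    and negN: "negligible N"
    and der: "\<And>x. x \<notin> N \<Longrightarrow> ((\<lambda>t. F (x + t *\<^sub>R b)) has_real_derivative F' x) (at 0)"
  shows "F' integrable_on UNIV" "integral UNIV F' = 0"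
proof -
  have M0: "M \<ge> 0" using lip[of 1 0] by (smt (verit) abs_ge_zero)
  obtain c where c: "K \<subseteq> cbox (-c) c" using bounded_subset_cbox_symmetric[OF bK] by blast
  define K' where "K' = {x. \<exists>t\<in>{0..1}. x + t *\<^sub>R b \<in> K}"
  have "bounded K'"
  proof -
    obtain B where B: "\<And>x. x \<in> K \<Longrightarrow> norm x \<le> B" using bK bounded_iff by blast
    have "norm x \<le> B + norm b" if xK: "x \<in> K'" for x
    proof -
      obtain t where t: "t \<in> {0..1}" "x + t *\<^sub>R b \<in> K" using xK unfolding K'_def by blast
      have "norm x \<le> norm (x + t *\<^sub>R b) + norm (t *\<^sub>R b)" by (smt (verit) norm_triangle_ineq4 add_diff_cancel_right')
      also have "\<dots> \<le> B + norm b"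
      proof -
        have "t * norm b \<le> norm b" using t(1) by (simp add: mult_left_le_one_le)
        then show ?thesis using B[OF t(2)] t(1) by simp
      qed
      finally show ?thesis .
    qed
    then show ?thesis unfolding bounded_iff by blast
  qed
  then obtain c' where c': "K' \<subseteq> cbox (-c') c'" using bounded_subset_cbox_symmetric by blast
  define I where "I = integral (cbox (-c) c) F"
  have FI: "(F has_integral I) (cbox (-c) c)"
    unfolding I_def by (rule integrable_integral, rule integrable_on_subcbox[OF Fint]) auto
  have FU: "(F has_integral I) UNIV"
    by (rule has_integral_on_superset[OF FI]) (use supp c in auto)
  have shiftI: "((\<lambda>x. F (x + t *\<^sub>R b)) has_integral I) UNIV" for t
  proof -
    have "((\<lambda>x. F (1 *\<^sub>R x + t *\<^sub>R b)) has_integral (1 / \<bar>1\<bar> ^ DIM('a)) *\<^sub>R I)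
       ((\<lambda>x. (1 / 1) *\<^sub>R x + - ((1 / 1) *\<^sub>R (t *\<^sub>R b))) ` cbox (-c) c)"
      by (rule has_integral_affinity[OF FI]) simp
    then have h: "((\<lambda>x. F (x + t *\<^sub>R b)) has_integral I) ((\<lambda>x. x - t *\<^sub>R b) ` cbox (-c) c)" by simp
    show ?thesis
    proof (rule has_integral_on_superset[OF h])
      fix x assume "x \<notin> (\<lambda>x. x - t *\<^sub>R b) ` cbox (- c) c"
      then have "x + t *\<^sub>R b \<notin> cbox (-c) c" by (metis (no_types, lifting) add_diff_cancel_right' image_eqI)
      then show "F (x + t *\<^sub>R b) = 0" using supp c by blast
    qed auto
  qed
  define tk where "tk k = inverse (real (Suc k))" for k
  have tk: "tk k > 0" "tk k \<le> 1" for k unfolding tk_def by (auto simp: inverse_le_1_iff)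
  define g where "g k x = (if x \<in> N then 0 else (F (x + tk k *\<^sub>R b) - F x) / tk k)" for k x
  define G where "G x = (if x \<in> N then 0 else F' x)" for x
  have gI: "(g k has_integral 0) UNIV" for k
  proof -
    have "((\<lambda>x. (F (x + tk k *\<^sub>R b) - F x) / tk k) has_integral (I - I) / tk k) UNIV"
      using has_integral_diff[OF shiftI FU] by (intro has_integral_divide)
    then have "((\<lambda>x. (F (x + tk k *\<^sub>R b) - F x) / tk k) has_integral 0) UNIV" by simp
    then show ?thesis
      by (rule has_integral_spike[OF negN, rotated]) (auto simp: g_def)
  qed
  define h where "h x = (if x \<in> cbox (-c') c' then M else 0)" for x
  have hI: "h integrable_on UNIV"
  proof -
    have "h integrable_on cbox (-c') c'"
      by (rule integrable_eq[OF integrable_const[of M]]) (auto simp: h_def)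
    then show ?thesis by (rule integrable_on_superset) (auto simp: h_def)
  qed
  have bound: "norm (g k x) \<le> h x" for k x
  proof (cases "x \<in> N")
    case True then show ?thesis using M0 by (auto simp: g_def h_def)
  next
    case False
    show ?thesis
    proof (cases "x \<in> cbox (-c') c'")
      case True
      have "\<bar>F (x + tk k *\<^sub>R b) - F x\<bar> \<le> M * tk k" using lip[OF tk] .
      then have "\<bar>(F (x + tk k *\<^sub>R b) - F x) / tk k\<bar> \<le> M" using tk(1)[of k]
        by (simp add: abs_div pos_divide_le_eq)
      then show ?thesis using True False by (simp add: g_def h_def)
    next
      case out: False
      then have "x \<notin> K'" using c' by blast
      then have nk: "\<forall>t\<in>{0..1}. x + t *\<^sub>R b \<notin> K" unfolding K'_def by blast
      have "x + tk k *\<^sub>R b \<notin> K" using nk tk[of k] by auto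
      moreover have "x \<notin> K" using nk[rule_format, of 0] by simp
      ultimately
      show ?thesis using out False supp M0 by (simp add: g_def h_def)
    qed
  qed
  have conv: "(\<lambda>k. g k x) \<longlonglongrightarrow> G x" for x
  proof (cases "x \<in> N")
    case True then show ?thesis by (simp add: g_def G_def)
  next
    case False
    have "((\<lambda>t. F (x + t *\<^sub>R b)) has_real_derivative F' x) (at 0)" using der[OF False] .
    then have lim: "(\<lambda>t. (F (x + t *\<^sub>R b) - F x) / t) \<midarrow>0\<rightarrow> F' x"
      unfolding DERIV_def by simp
    have "tk \<longlonglongrightarrow> 0" unfolding tk_def using LIMSEQ_inverse_real_of_nat .
    moreover have "\<forall>n. tk n \<noteq> 0" using tk by (metis less_irrefl)
    ultimately have "(\<lambda>k. (F (x + tk k *\<^sub>R b) - F x) / tk k) \<longlonglongrightarrow> F' x"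
      using lim unfolding LIMSEQ_SEQ_conv[symmetric] by blast
    then show ?thesis using False by (simp add: g_def G_def)
  qed
  have gint: "g k integrable_on UNIV" for k using gI by blast
  from dominated_convergence[OF gint hI _ conv]
  have GI: "G integrable_on UNIV" and lim: "(\<lambda>k. integral UNIV (g k)) \<longlonglongrightarrow> integral UNIV G"
    using bound by auto
  have "integral UNIV G = 0"
  proof -
    have "(\<lambda>k. integral UNIV (g k)) = (\<lambda>k. 0)" using gI integral_unique by blast
    with lim show ?thesis by (simp add: LIMSEQ_const_iff)
  qed
  moreover have "integral UNIV F' = integral UNIV G"
    by (rule integral_spike[OF negN]) (auto simp: G_def)
  moreover have "F' integrable_on UNIV"
    by (rule integrable_spike[OF GI negN]) (auto simp: G_def)
  ultimately show "F' integrable_on UNIV" "integral UNIV F' = 0" by auto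
qed


lemma cont_int_cball:
  fixes f :: "'a::euclidean_space \<Rightarrow> real"
  assumes "continuous_on (cball a r) f"
  shows "f integrable_on cball a r"
proof -
  have "compact (f ` cball a r)" using compact_continuous_image[OF assms] by simp
  then obtain B where B: "\<And>x. x \<in> cball a r \<Longrightarrow> norm (f x) \<le> B"
    using compact_imp_bounded bounded_iff by (metis imageI)
  show ?thesis
  proof (rule measurable_bounded_by_integrable_imp_integrable_real)
    show "f \<in> borel_measurable (lebesgue_on (cball a r))"
      by (rule continuous_imp_measurable_on_sets_lebesgue[OF assms]) (simp add: lmeasurable_cball fmeasurableD)
    show "(\<lambda>x. B) integrable_on cball a r" by (rule integrable_on_const[OF lmeasurable_cball])
    show "\<And>x. x \<in> cball a r \<Longrightarrow> \<bar>f x\<bar> \<le> B" using B by simp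
    show "cball a r \<in> sets lebesgue" by (simp add: lmeasurable_cball fmeasurableD)
  qed
qed

lemma dir_expand:
  fixes g :: "'a::euclidean_space \<Rightarrow> 'b::real_normed_vector"
  assumes "(g has_derivative D) (at z)"
  shows "dirderiv g v z = (\<Sum>b\<in>Basis. (v \<bullet> b) *\<^sub>R dirderiv g b z)"
proof -
  have l: "linear D" using has_derivative_linear[OF assms] .
  have "dirderiv g v z = D v" using dirderiv_eq[OF assms] .
  also have "\<dots> = D (\<Sum>b\<in>Basis. (v \<bullet> b) *\<^sub>R b)" by (simp add: euclidean_representation)
  also have "\<dots> = (\<Sum>b\<in>Basis. (v \<bullet> b) *\<^sub>R D b)"
    by (simp add: linear_sum[OF l] linear_cmul[OF l])
  also have "\<dots> = (\<Sum>b\<in>Basis. (v \<bullet> b) *\<^sub>R dirderiv g b z)" using dirderiv_eq[OF assms] by simp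
  finally show ?thesis .
qed

lemma deriv_bound:
  fixes g :: "'a::euclidean_space \<Rightarrow> real"
  assumes S: "open S" and g1: "Ck_on (Suc k) S g" and K: "compact K" "K \<subseteq> S"
  obtains C where "C \<ge> 0" "\<And>z v. z \<in> K \<Longrightarrow> \<bar>dirderiv g v z\<bar> \<le> C * norm v"
proof -
  have "\<exists>C. \<forall>z\<in>K. \<bar>dirderiv g b z\<bar> \<le> C" for b
  proof -
    have "continuous_on K (dirderiv g b)"
      using Ck_on_cont[OF Ck_on_dir[OF S g1]] K(2) continuous_on_subset by blast
    then have "compact (dirderiv g b ` K)" using compact_continuous_image K(1) by blast
    then show ?thesis using compact_imp_bounded bounded_iff by (metis imageI real_norm_def)
  qed
  then obtain Cb where Cb: "\<And>b z. z \<in> K \<Longrightarrow> \<bar>dirderiv g b z\<bar> \<le> Cb b" by metis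
  define C where "C = (\<Sum>b\<in>Basis. \<bar>Cb b\<bar>)"
  have "C \<ge> 0" by (simp add: C_def sum_nonneg)
  moreover have "\<bar>dirderiv g v z\<bar> \<le> C * norm v" if z: "z \<in> K" for z v
  proof -
    have "dirderiv g v z = (\<Sum>b\<in>Basis. (v \<bullet> b) * dirderiv g b z)"
      using dir_expand[OF Ck_on_Suc_D[OF g1]] z K(2) by auto
    also have "\<bar>\<dots>\<bar> \<le> (\<Sum>b\<in>Basis. \<bar>v \<bullet> b\<bar> * \<bar>dirderiv g b z\<bar>)"
      by (rule order_trans[OF sum_abs]) (simp add: abs_mult)
    also have "\<dots> \<le> (\<Sum>b\<in>Basis. norm v * \<bar>Cb b\<bar>)"
    proof (rule sum_mono)
      fix b :: 'a assume b: "b \<in> Basis"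
      have "\<bar>v \<bullet> b\<bar> \<le> norm v" using Basis_le_norm[OF b] .
      moreover have "\<bar>dirderiv g b z\<bar> \<le> \<bar>Cb b\<bar>" using Cb[OF z, of b] by simp
      ultimately show "\<bar>v \<bullet> b\<bar> * \<bar>dirderiv g b z\<bar> \<le> norm v * \<bar>Cb b\<bar>"
        by (intro mult_mono) auto
    qed
    also have "\<dots> = C * norm v" by (simp add: C_def sum_distrib_left mult.commute)
    finally show ?thesis .
  qed
  ultimately show ?thesis using that by blast
qed

lemma line_mvt_pos:
  fixes g :: "'a::real_normed_vector \<Rightarrow> real"
  assumes t: "t \<ge> 0"
    and d: "\<And>s. 0 \<le> s \<Longrightarrow> s \<le> t \<Longrightarrow> (g has_derivative D s) (at (x + s *\<^sub>R v))"
    and bd: "\<And>s. 0 \<le> s \<Longrightarrow> s \<le> t \<Longrightarrow> \<bar>D s v\<bar> \<le> C"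
  shows "\<bar>g (x + t *\<^sub>R v) - g x\<bar> \<le> C * t"
proof (cases "t = 0")
  case True then show ?thesis by simp
next
  case False
  then have tp: "0 < t" using t by simp
  have "\<And>s. 0 \<le> s \<Longrightarrow> s \<le> t \<Longrightarrow> ((\<lambda>s. g (x + s *\<^sub>R v)) has_real_derivative D s v) (at s)"
    using line_deriv d by blast
  from MVT2[OF tp this] obtain z where z: "0 < z" "z < t" "g (x + t *\<^sub>R v) - g (x + 0 *\<^sub>R v) = (t - 0) * D z v"
    by blast
  then have "\<bar>g (x + t *\<^sub>R v) - g x\<bar> = t * \<bar>D z v\<bar>" using tp by (simp add: abs_mult)
  also have "\<dots> \<le> t * C" using bd[of z] z tp by (intro mult_left_mono) auto
  finally show ?thesis by (simp add: mult.commute)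
qed

lemma scale_cball:
  fixes g :: "'a::euclidean_space \<Rightarrow> real"
  assumes \<rho>: "\<rho> > 0" and gi: "g integrable_on cball a \<rho>"
  shows "((\<lambda>y. g (a + \<rho> *\<^sub>R y)) has_integral (integral (cball a \<rho>) g / \<rho> ^ DIM('a))) (cball 0 1)"
proof -
  define J where "J = integral (cball a \<rho>) g"
  define G where "G x = (if x \<in> cball a \<rho> then g x else 0)" for x
  have GU: "(G has_integral J) UNIV"
    unfolding G_def J_def using gi has_integral_restrict_UNIV integrable_integral by blast
  obtain c where c: "cball a \<rho> \<subseteq> cbox (-c) c"
    using bounded_subset_cbox_symmetric[OF bounded_cball] by blast
  have Gbox: "(G has_integral J) (cbox (-c) c)"
  proof -
    have "G integrable_on cbox (-c) c" using integrable_on_subcbox GU by blast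
    then have "(G has_integral integral (cbox (-c) c) G) (cbox (-c) c)" by blast
    moreover then have "(G has_integral integral (cbox (-c) c) G) UNIV"
      by (rule has_integral_on_superset) (use c in \<open>auto simp: G_def\<close>)
    ultimately show ?thesis using GU has_integral_unique by metis
  qed
  have "((\<lambda>y. G (\<rho> *\<^sub>R y + a)) has_integral (1 / \<bar>\<rho>\<bar> ^ DIM('a)) *\<^sub>R J)
     ((\<lambda>x. (1 / \<rho>) *\<^sub>R x + - ((1 / \<rho>) *\<^sub>R a)) ` cbox (-c) c)"
    by (rule has_integral_affinity[OF Gbox]) (use \<rho> in auto)
  then have "((\<lambda>y. G (\<rho> *\<^sub>R y + a)) has_integral (1 / \<bar>\<rho>\<bar> ^ DIM('a)) *\<^sub>R J) UNIV"
  proof (rule has_integral_on_superset)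
    fix y assume "y \<notin> (\<lambda>x. (1 / \<rho>) *\<^sub>R x + - ((1 / \<rho>) *\<^sub>R a)) ` cbox (- c) c"
    then have "\<rho> *\<^sub>R y + a \<notin> cbox (-c) c"
      using \<rho> by (auto simp: image_iff intro!: bexI[of _ "\<rho> *\<^sub>R y + a"] simp: algebra_simps)
    then show "G (\<rho> *\<^sub>R y + a) = 0" using c by (auto simp: G_def)
  qed auto
  moreover have "G (\<rho> *\<^sub>R y + a) = (if y \<in> cball 0 1 then g (a + \<rho> *\<^sub>R y) else 0)" for y
  proof -
    have "(\<rho> *\<^sub>R y + a \<in> cball a \<rho>) = (y \<in> cball 0 1)"
      using \<rho> by (simp add: dist_norm mem_cball)
    then show ?thesis by (simp add: G_def add.commute)
  qed
  ultimately have "((\<lambda>y. if y \<in> cball 0 1 then g (a + \<rho> *\<^sub>R y) else 0) has_integral J / \<rho> ^ DIM('a)) UNIV"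
    using \<rho> by (simp add: divide_inverse_commute)
  then show ?thesis unfolding J_def using has_integral_restrict_UNIV by blast
qed


lemma w_lip:
  fixes p q :: "'a::real_normed_vector"
  assumes "norm p \<le> 2" "norm q \<le> 2"
  shows "\<bar>max 0 ((1 - (norm p)\<^sup>2) / 2) - max 0 ((1 - (norm q)\<^sup>2) / 2)\<bar> \<le> 2 * norm (p - q)"
proof -
  have "\<bar>max 0 ((1 - (norm p)\<^sup>2) / 2) - max 0 ((1 - (norm q)\<^sup>2) / 2)\<bar>
      \<le> \<bar>(1 - (norm p)\<^sup>2) / 2 - (1 - (norm q)\<^sup>2) / 2\<bar>"
  proof -
    have "\<And>A B::real. \<bar>max 0 A - max 0 B\<bar> \<le> \<bar>A - B\<bar>"
      by (case_tac "A \<le> 0"; case_tac "B \<le> 0") (auto simp: max_def)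
    then show ?thesis .
  qed
  also have "\<dots> = \<bar>(norm q - norm p) * (norm q + norm p)\<bar> / 2"
  proof -
    have e: "(1 - (norm p)\<^sup>2) / 2 - (1 - (norm q)\<^sup>2) / 2 = ((norm q - norm p) * (norm q + norm p)) / 2"
      by (simp add: power2_eq_square field_simps)
    show ?thesis unfolding e by simp
  qed
  also have "\<dots> = \<bar>norm q - norm p\<bar> * (norm q + norm p) / 2" by (simp add: abs_mult)
  also have "\<dots> \<le> norm (p - q) * 4 / 2"
  proof -
    have "\<bar>norm q - norm p\<bar> \<le> norm (p - q)" by (metis norm_minus_commute norm_triangle_ineq3)
    moreover have "norm q + norm p \<le> 4" using assms by simp
    ultimately show ?thesis by (intro divide_right_mono mult_mono) auto
  qed
  finally show ?thesis by simp
qed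

lemma ibp_ball_b:
  fixes u :: "'a::euclidean_space \<Rightarrow> real"
  assumes S: "open S" and u2: "Ck_on 2 S u" and sub: "cball a (2*r) \<subseteq> S"
    and \<rho>: "0 \<le> \<rho>" "\<rho> \<le> r" and b: "b \<in> Basis"
  defines "w \<equiv> \<lambda>y::'a. max 0 ((1 - (norm y)\<^sup>2) / 2)"
  defines "F' \<equiv> \<lambda>y. if norm y < 1 then - (y \<bullet> b) * dirderiv u b (a + \<rho> *\<^sub>R y)
      + w y * (\<rho> * dirderiv (dirderiv u b) b (a + \<rho> *\<^sub>R y)) else 0"
  shows "F' integrable_on UNIV" "integral UNIV F' = 0"
proof -
  have u2': "Ck_on (Suc (Suc 0)) S u" using u2 by (simp add: numeral_2_eq_2)
  have u1b: "Ck_on (Suc 0) S (dirderiv u b)" using Ck_on_dir[OF S u2'] .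
  have nb: "norm b = 1" using b by simp
  have inS: "a + \<rho> *\<^sub>R y \<in> S" if "norm y \<le> 2" for y
  proof -
    have "dist a (a + \<rho> *\<^sub>R y) = \<rho> * norm y" using \<rho> by (simp add: dist_norm)
    also have "\<dots> \<le> r * 2" using \<rho> that by (intro mult_mono) auto
    finally show ?thesis using sub by (auto simp: mult.commute)
  qed
  define H where "H y = dirderiv u b (a + \<rho> *\<^sub>R y)" for y
  define F where "F y = w y * H y" for y
  have K2: "compact (cball a (2*r))" "cball a (2*r) \<subseteq> S" using sub by auto
  obtain C1 where C1: "C1 \<ge> 0" "\<And>z v. z \<in> cball a (2*r) \<Longrightarrow> \<bar>dirderiv u v z\<bar> \<le> C1 * norm v"
    using deriv_bound[OF S u2' K2] by blast
  obtain C2 where C2: "C2 \<ge> 0" "\<And>z v. z \<in> cball a (2*r) \<Longrightarrow> \<bar>dirderiv (dirderiv u b) v z\<bar> \<le> C2 * norm v"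
    using deriv_bound[OF S u1b K2] by blast
  have inK2: "a + \<rho> *\<^sub>R y \<in> cball a (2*r)" if "norm y \<le> 2" for y
  proof -
    have "dist a (a + \<rho> *\<^sub>R y) = \<rho> * norm y" using \<rho> by (simp add: dist_norm)
    also have "\<dots> \<le> r * 2" using \<rho> that by (intro mult_mono) auto
    finally show ?thesis by (auto simp: mult.commute)
  qed
  have w0: "w y = 0" if "norm y \<ge> 1" for y
  proof -
    have "(norm y)\<^sup>2 \<ge> 1" using that by (simp add: one_le_power)
    then show ?thesis by (simp add: w_def)
  qed
  have wb: "0 \<le> w y" "w y \<le> 1/2" for y
    unfolding w_def max_def using zero_le_power2[of "norm y"] by auto
  have Hc: "continuous_on (cball 0 2) H"
  proof -
    have "continuous_on S (dirderiv u b)" using Ck_on_cont[OF u1b] .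
    moreover have "continuous_on (cball 0 2) (\<lambda>y. a + \<rho> *\<^sub>R y)" by (intro continuous_intros)
    moreover have "(\<lambda>y. a + \<rho> *\<^sub>R y) ` cball 0 2 \<subseteq> S" using inS by auto
    ultimately show ?thesis unfolding H_def using continuous_on_compose2 by blast
  qed
  have Fint: "F integrable_on UNIV"
  proof -
    have "continuous_on (cball 0 1) F" unfolding F_def w_def
      by (intro continuous_intros continuous_on_subset[OF Hc]) auto
    then have "F integrable_on cball 0 1" by (rule cont_int_cball)
    then show ?thesis by (rule integrable_on_superset) (auto simp: F_def w0)
  qed
  have lip: "\<bar>F (y + t *\<^sub>R b) - F y\<bar> \<le> (2 * C1 + C2 * r / 2) * t" if t: "0 < t" "t \<le> 1" for y t
  proof (cases "norm y \<le> 1 \<or> norm (y + t *\<^sub>R b) \<le> 1")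
    case False
    then show ?thesis using w0 C1 C2 t \<rho> by (simp add: F_def)
  next
    case True
    have seg: "norm (y + s *\<^sub>R b) \<le> 2" if "0 \<le> s" "s \<le> t" for s
    proof (cases "norm y \<le> 1")
      case True
      have "norm (y + s *\<^sub>R b) \<le> norm y + norm (s *\<^sub>R b)" by (rule norm_triangle_ineq)
      also have "\<dots> \<le> 1 + 1" using True that t nb by simp
      finally show ?thesis by simp
    next
      case False
      then have h: "norm (y + t *\<^sub>R b) \<le> 1" using \<open>norm y \<le> 1 \<or> norm (y + t *\<^sub>R b) \<le> 1\<close> by simp
      have "y + s *\<^sub>R b = (y + t *\<^sub>R b) - (t - s) *\<^sub>R b" by (simp add: algebra_simps)
      then have "norm (y + s *\<^sub>R b) \<le> norm (y + t *\<^sub>R b) + norm ((t - s) *\<^sub>R b)"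
        by (metis norm_triangle_ineq4)
      also have "\<dots> \<le> 1 + 1" using h that t nb by simp
      finally show ?thesis by simp
    qed
    have y2: "norm y \<le> 2" using seg[of 0] t by simp
    have yt2: "norm (y + t *\<^sub>R b) \<le> 2" using seg[of t] t by simp
    have dH: "\<bar>H (y + t *\<^sub>R b) - H y\<bar> \<le> C2 * r * t"
    proof -
      have eq: "a + \<rho> *\<^sub>R (y + t *\<^sub>R b) = (a + \<rho> *\<^sub>R y) + t *\<^sub>R (\<rho> *\<^sub>R b)" by (simp add: algebra_simps)
      have "\<bar>dirderiv u b ((a + \<rho> *\<^sub>R y) + t *\<^sub>R (\<rho> *\<^sub>R b)) - dirderiv u b (a + \<rho> *\<^sub>R y)\<bar> \<le> (C2 * r) * t"
      proof (rule line_mvt_pos)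
        show "0 \<le> t" using t by simp
        fix s assume s: "0 \<le> s" "s \<le> t"
        have pt: "(a + \<rho> *\<^sub>R y) + s *\<^sub>R (\<rho> *\<^sub>R b) = a + \<rho> *\<^sub>R (y + s *\<^sub>R b)" by (simp add: algebra_simps)
        show "(dirderiv u b has_derivative (\<lambda>h. dirderiv (dirderiv u b) h ((a + \<rho> *\<^sub>R y) + s *\<^sub>R (\<rho> *\<^sub>R b))))
            (at ((a + \<rho> *\<^sub>R y) + s *\<^sub>R (\<rho> *\<^sub>R b)))"
          unfolding pt by (rule Ck_on_Suc_D[OF u1b inS[OF seg[OF s]]])
        have "\<bar>dirderiv (dirderiv u b) (\<rho> *\<^sub>R b) ((a + \<rho> *\<^sub>R y) + s *\<^sub>R (\<rho> *\<^sub>R b))\<bar> \<le> C2 * norm (\<rho> *\<^sub>R b)"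
          unfolding pt by (rule C2(2)[OF inK2[OF seg[OF s]]])
        also have "\<dots> \<le> C2 * r" using nb \<rho> C2(1) by (simp add: mult_left_mono)
        finally show "\<bar>dirderiv (dirderiv u b) (\<rho> *\<^sub>R b) ((a + \<rho> *\<^sub>R y) + s *\<^sub>R (\<rho> *\<^sub>R b))\<bar> \<le> C2 * r" .
      qed
      then show ?thesis unfolding H_def eq .
    qed
    have Hb: "\<bar>H (y + t *\<^sub>R b)\<bar> \<le> C1" using C1(2)[OF inK2[OF yt2], of b] nb by (simp add: H_def)
    have dw: "\<bar>w (y + t *\<^sub>R b) - w y\<bar> \<le> 2 * t"
      using w_lip[OF yt2 y2] t nb unfolding w_def by simp
    have "F (y + t *\<^sub>R b) - F y = (w (y + t *\<^sub>R b) - w y) * H (y + t *\<^sub>R b) + w y * (H (y + t *\<^sub>R b) - H y)"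
      by (simp add: F_def algebra_simps)
    also have "\<bar>\<dots>\<bar> \<le> \<bar>w (y + t *\<^sub>R b) - w y\<bar> * \<bar>H (y + t *\<^sub>R b)\<bar> + \<bar>w y\<bar> * \<bar>H (y + t *\<^sub>R b) - H y\<bar>"
      by (metis abs_mult abs_triangle_ineq)
    also have "\<dots> \<le> (2 * t) * C1 + (1/2) * (C2 * r * t)"
      using dw Hb dH wb[of y] t by (intro add_mono mult_mono) auto
    finally show ?thesis by (simp add: algebra_simps)
  qed
  have der: "((\<lambda>t. F (y + t *\<^sub>R b)) has_real_derivative F' y) (at 0)" if yN: "y \<notin> sphere 0 1" for y
  proof (cases "norm y < 1")
    case True
    define \<phi> where "\<phi> t = (1 - (y \<bullet> y + 2 * t * (y \<bullet> b) + t\<^sup>2 * (b \<bullet> b))) / 2" for t :: real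
    have \<phi>eq: "\<phi> t = (1 - (norm (y + t *\<^sub>R b))\<^sup>2) / 2" for t
    proof -
      have "(norm (y + t *\<^sub>R b))\<^sup>2 = y \<bullet> y + 2 * t * (y \<bullet> b) + t\<^sup>2 * (b \<bullet> b)"
        unfolding power2_norm_eq_inner by (simp add: inner_add_left inner_add_right inner_commute power2_eq_square algebra_simps)
      then show ?thesis by (simp add: \<phi>_def)
    qed
    have d\<phi>: "(\<phi> has_real_derivative - (y \<bullet> b)) (at 0)"
      unfolding \<phi>_def by (auto intro!: derivative_eq_intros)
    have dD: "(dirderiv u b has_derivative (\<lambda>h. dirderiv (dirderiv u b) h (a + \<rho> *\<^sub>R y))) (at ((a + \<rho> *\<^sub>R y) + 0 *\<^sub>R (\<rho> *\<^sub>R b)))"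
      using Ck_on_Suc_D[OF u1b inS[of y]] True by simp
    have dH0: "((\<lambda>t. dirderiv u b ((a + \<rho> *\<^sub>R y) + t *\<^sub>R (\<rho> *\<^sub>R b))) has_real_derivative
        dirderiv (dirderiv u b) (\<rho> *\<^sub>R b) (a + \<rho> *\<^sub>R y)) (at 0)"
      using line_deriv[OF dD] .
    have lin: "dirderiv (dirderiv u b) (\<rho> *\<^sub>R b) (a + \<rho> *\<^sub>R y) = \<rho> * dirderiv (dirderiv u b) b (a + \<rho> *\<^sub>R y)"
      using dir_expand[OF Ck_on_Suc_D[OF u1b inS[of y]], of "\<rho> *\<^sub>R b"] dir_expand[OF Ck_on_Suc_D[OF u1b inS[of y]], of b]
        True by (simp add: sum_distrib_left algebra_simps)
    have dH: "((\<lambda>t. H (y + t *\<^sub>R b)) has_real_derivative \<rho> * dirderiv (dirderiv u b) b (a + \<rho> *\<^sub>R y)) (at 0)"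
    proof -
      have "(\<lambda>t. H (y + t *\<^sub>R b)) = (\<lambda>t. dirderiv u b ((a + \<rho> *\<^sub>R y) + t *\<^sub>R (\<rho> *\<^sub>R b)))"
        by (rule ext) (simp add: H_def algebra_simps)
      then show ?thesis using dH0 lin by simp
    qed
    have prod: "((\<lambda>t. \<phi> t * H (y + t *\<^sub>R b)) has_real_derivative
        - (y \<bullet> b) * H y + \<rho> * dirderiv (dirderiv u b) b (a + \<rho> *\<^sub>R y) * \<phi> 0) (at 0)"
      using DERIV_mult[OF d\<phi> dH] by simp
    have \<phi>0: "\<phi> 0 = w y"
    proof -
      have "(norm y)\<^sup>2 < 1" using True by (simp add: power_less_one_iff)
      then show ?thesis unfolding \<phi>eq w_def by simp
    qed
    show ?thesis
    proof (rule has_field_derivative_transform_within_open[OF _ _ _])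
      show "((\<lambda>t. \<phi> t * H (y + t *\<^sub>R b)) has_real_derivative F' y) (at 0)"
        using prod True \<phi>0 by (simp add: F'_def H_def algebra_simps)
      show "open {t. norm (y + t *\<^sub>R b) < 1}"
        by (rule open_Collect_less) (intro continuous_intros)+
      show "0 \<in> {t. norm (y + t *\<^sub>R b) < 1}" using True by simp
      fix t assume "t \<in> {t. norm (y + t *\<^sub>R b) < 1}"
      then have "(norm (y + t *\<^sub>R b))\<^sup>2 < 1" by (simp add: power_less_one_iff)
      then show "\<phi> t * H (y + t *\<^sub>R b) = F (y + t *\<^sub>R b)"
        unfolding F_def \<phi>eq w_def by simp
    qed
  next
    case False
    then have y1: "norm y > 1" using yN by auto
    have F'0: "F' y = 0" using False by (simp add: F'_def)
    have "((\<lambda>t. F (y + t *\<^sub>R b)) has_real_derivative 0) (at 0)"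
    proof (rule has_field_derivative_transform_within_open[of "\<lambda>t. 0" 0 0 "{t. 1 < norm (y + t *\<^sub>R b)}"])
      show "((\<lambda>t. 0) has_real_derivative 0) (at 0)" by simp
      show "open {t. 1 < norm (y + t *\<^sub>R b)}"
        by (rule open_Collect_less) (intro continuous_intros)+
      show "0 \<in> {t. 1 < norm (y + t *\<^sub>R b)}" using y1 by simp
      fix t assume "t \<in> {t. 1 < norm (y + t *\<^sub>R b)}"
      then show "0 = F (y + t *\<^sub>R b)" using w0[of "y + t *\<^sub>R b"] by (simp add: F_def)
    qed
    then show ?thesis using F'0 by simp
  qed
  have supp: "\<And>x. x \<notin> cball 0 1 \<Longrightarrow> F x = 0" using w0 by (simp add: F_def)
  show "F' integrable_on UNIV" "integral UNIV F' = 0"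
    using ibp_line[OF Fint bounded_cball[of 0 1] supp lip negligible_sphere[of 0 1] der] by auto
qed


lemma ibp_ball:
  fixes u :: "'a::euclidean_space \<Rightarrow> real"
  assumes S: "open S" and u2: "Ck_on 2 S u" and sub: "cball a (2*r) \<subseteq> S"
    and lap: "\<And>x. x \<in> S \<Longrightarrow> (\<Sum>c\<in>Basis. dirderiv (dirderiv u c) c x) \<ge> 0"
    and \<rho>: "0 \<le> \<rho>" "\<rho> \<le> r"
  shows "integral (cball 0 1) (\<lambda>y. dirderiv u y (a + \<rho> *\<^sub>R y)) \<ge> 0"
proof -
  have u2': "Ck_on (Suc (Suc 0)) S u" using u2 by (simp add: numeral_2_eq_2)
  have u1: "Ck_on (Suc 0) S u" using Ck_on_mono[OF u2'] .
  define w where "w = (\<lambda>y::'a. max 0 ((1 - (norm y)\<^sup>2) / 2))"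
  define F' where "F' b y = (if norm y < 1 then - (y \<bullet> b) * dirderiv u b (a + \<rho> *\<^sub>R y)
      + w y * (\<rho> * dirderiv (dirderiv u b) b (a + \<rho> *\<^sub>R y)) else 0)" for b y
  have Fb: "F' b integrable_on UNIV" "integral UNIV (F' b) = 0" if "b \<in> Basis" for b
    using ibp_ball_b[OF S u2 sub \<rho> that] unfolding F'_def w_def by auto
  have inS: "a + \<rho> *\<^sub>R y \<in> S" if "norm y \<le> 1" for y
  proof -
    have "dist a (a + \<rho> *\<^sub>R y) = \<rho> * norm y" using \<rho> by (simp add: dist_norm)
    also have "\<dots> \<le> r * 2" using \<rho> that by (intro mult_mono) auto
    finally show ?thesis using sub by (auto simp: mult.commute)
  qed
  define g0 where "g0 y = dirderiv u y (a + \<rho> *\<^sub>R y)" for y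
  have g0_exp: "g0 y = (\<Sum>b\<in>Basis. (y \<bullet> b) * dirderiv u b (a + \<rho> *\<^sub>R y))" if "norm y \<le> 1" for y
    using dir_expand[OF Ck_on_Suc_D[OF u1 inS[OF that]], of y] by (simp add: g0_def)
  define Fs where "Fs y = (\<Sum>b\<in>Basis. F' b y)" for y
  have FsI: "integral UNIV Fs = 0" "Fs integrable_on UNIV"
  proof -
    have "integral UNIV Fs = (\<Sum>b\<in>Basis. integral UNIV (F' b))"
      unfolding Fs_def by (rule integral_sum) (use Fb in auto)
    then show "integral UNIV Fs = 0" using Fb by simp
    show "Fs integrable_on UNIV" unfolding Fs_def by (rule integrable_sum) (use Fb in auto)
  qed
  have g0c: "continuous_on (cball 0 1) g0"
  proof -
    have "continuous_on (cball 0 1) (\<lambda>y. \<Sum>b\<in>Basis. (y \<bullet> b) * dirderiv u b (a + \<rho> *\<^sub>R y))"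
    proof (intro continuous_intros continuous_on_compose2[OF Ck_on_cont[OF Ck_on_dir[OF S u1]]])
      show "(\<lambda>y. a + \<rho> *\<^sub>R y) ` cball 0 1 \<subseteq> S" using inS by auto
    qed
    then show ?thesis by (rule continuous_on_eq) (simp add: g0_exp)
  qed
  define P where "P y = (if y \<in> cball 0 1 then g0 y else 0)" for y
  have PI: "(P has_integral integral (cball 0 1) g0) UNIV"
    unfolding P_def using cont_int_cball[OF g0c] has_integral_restrict_UNIV integrable_integral by blast
  define Q where "Q y = (if norm y < 1 then w y * (\<rho> * (\<Sum>c\<in>Basis. dirderiv (dirderiv u c) c (a + \<rho> *\<^sub>R y))) else 0)" for y
  have FsQP: "Q y = Fs y + P y" if "y \<notin> sphere 0 1" for y
  proof (cases "norm y < 1")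
    case True
    have "Fs y = - g0 y + w y * (\<rho> * (\<Sum>c\<in>Basis. dirderiv (dirderiv u c) c (a + \<rho> *\<^sub>R y)))"
      using True g0_exp[of y]
      by (simp add: Fs_def F'_def sum.distrib sum_distrib_left sum_negf sum_subtractf algebra_simps)
    then show ?thesis using True by (simp add: Q_def P_def)
  next
    case False
    then have "norm y > 1" using that by auto
    then show ?thesis by (simp add: Q_def P_def Fs_def F'_def)
  qed
  have QI: "(Q has_integral (0 + integral (cball 0 1) g0)) UNIV"
  proof (rule has_integral_spike[OF negligible_sphere[of 0 1]])
    show "((\<lambda>y. Fs y + P y) has_integral 0 + integral (cball 0 1) g0) UNIV"
      using has_integral_add[OF integrable_integral[OF FsI(2)] PI] FsI(1) by simp
    show "\<And>x. x \<in> UNIV - sphere 0 1 \<Longrightarrow> Q x = Fs x + P x" using FsQP by auto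
  qed
  have "0 \<le> integral UNIV Q"
  proof (rule integral_nonneg)
    show "Q integrable_on UNIV" using QI by blast
    fix y :: 'a
    show "0 \<le> Q y"
    proof (cases "norm y < 1")
      case True
      have "0 \<le> w y" by (simp add: w_def)
      moreover have "0 \<le> (\<Sum>c\<in>Basis. dirderiv (dirderiv u c) c (a + \<rho> *\<^sub>R y))"
        using lap inS True by simp
      ultimately show ?thesis using True \<rho> by (simp add: Q_def)
    qed (simp add: Q_def)
  qed
  moreover have "g0 = (\<lambda>y. dirderiv u y (a + \<rho> *\<^sub>R y))" by (rule ext) (simp add: g0_def)
  ultimately show ?thesis using integral_unique[OF QI] by simp
qed


lemma line_bound_abs:
  fixes g :: "'a::real_normed_vector \<Rightarrow> real"
  assumes d: "\<And>s. \<bar>s\<bar> \<le> \<bar>t\<bar> \<Longrightarrow> (g has_derivative D s) (at (x + s *\<^sub>R v))"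
    and bd: "\<And>s w. \<bar>s\<bar> \<le> \<bar>t\<bar> \<Longrightarrow> norm w = norm v \<Longrightarrow> \<bar>D s w\<bar> \<le> C"
  shows "\<bar>g (x + t *\<^sub>R v) - g x\<bar> \<le> C * \<bar>t\<bar>"
proof (cases "t \<ge> 0")
  case True
  show ?thesis
    using line_mvt_pos[of t g D x v C] True d bd by auto
next
  case False
  have "\<bar>g (x + (-t) *\<^sub>R (-v)) - g x\<bar> \<le> C * (-t)"
  proof (rule line_mvt_pos)
    show "0 \<le> - t" using False by simp
    fix s assume s: "0 \<le> s" "s \<le> - t"
    have e: "x + s *\<^sub>R - v = x + (-s) *\<^sub>R v" by simp
    show "(g has_derivative D (-s)) (at (x + s *\<^sub>R - v))" unfolding e using d[of "-s"] s False by simp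
    show "\<bar>D (-s) (- v)\<bar> \<le> C" using bd s False by auto
  qed
  then show ?thesis using False by simp
qed

lemma M_deriv:
  fixes u :: "'a::euclidean_space \<Rightarrow> real"
  assumes S: "open S" and u1: "Ck_on (Suc 0) S u" and sub: "cball a r \<subseteq> S" and \<rho>: "\<bar>\<rho>\<bar> < r"
  shows "((\<lambda>s. integral (cball 0 1) (\<lambda>y. u (a + s *\<^sub>R y))) has_real_derivative
      integral (cball 0 1) (\<lambda>y. dirderiv u y (a + \<rho> *\<^sub>R y))) (at \<rho>)"
proof -
  define M where "M s = integral (cball 0 1) (\<lambda>y. u (a + s *\<^sub>R y))" for s
  define g0 where "g0 y = dirderiv u y (a + \<rho> *\<^sub>R y)" for y
  have inS: "a + s *\<^sub>R y \<in> cball a r" if "\<bar>s\<bar> \<le> r" "norm y \<le> 1" for s y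
  proof -
    have "dist a (a + s *\<^sub>R y) = \<bar>s\<bar> * norm y" by (simp add: dist_norm)
    also have "\<dots> \<le> r * 1" using that by (intro mult_mono) auto
    finally show ?thesis by simp
  qed
  have uint: "(\<lambda>y. u (a + s *\<^sub>R y)) integrable_on cball 0 1" if "\<bar>s\<bar> \<le> r" for s
  proof (rule cont_int_cball)
    show "continuous_on (cball 0 1) (\<lambda>y. u (a + s *\<^sub>R y))"
    proof (rule continuous_on_compose2[OF Ck_on_cont[OF u1]])
      show "continuous_on (cball 0 1) (\<lambda>y. a + s *\<^sub>R y)" by (intro continuous_intros)
      show "(\<lambda>y. a + s *\<^sub>R y) ` cball 0 1 \<subseteq> S" using inS that sub by auto
    qed
  qed
  obtain C where C: "C \<ge> 0" "\<And>z v. z \<in> cball a r \<Longrightarrow> \<bar>dirderiv u v z\<bar> \<le> C * norm v"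
    using deriv_bound[OF S u1 compact_cball sub] by blast
  have "(\<lambda>h. (M (\<rho> + h) - M \<rho>) / h) \<midarrow>0\<rightarrow> integral (cball 0 1) g0"
    unfolding LIMSEQ_SEQ_conv[symmetric]
  proof (intro allI impI, elim conjE)
    fix X :: "nat \<Rightarrow> real" assume X0: "\<forall>n. X n \<noteq> 0" and X: "X \<longlonglongrightarrow> 0"
    define \<delta> where "\<delta> = r - \<bar>\<rho>\<bar>"
    have \<delta>: "\<delta> > 0" using \<rho> by (simp add: \<delta>_def)
    from X \<delta> obtain N where N0: "\<forall>n\<ge>N. dist (X n) 0 < \<delta>" unfolding LIMSEQ_def by blast
    have N: "\<And>n. n \<ge> N \<Longrightarrow> \<bar>X n\<bar> < \<delta>" using N0 by (simp add: dist_real_def)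
    define Y where "Y n = X (n + N)" for n
    have Y0: "Y n \<noteq> 0" for n using X0 by (simp add: Y_def)
    have Ys: "\<bar>Y n\<bar> < \<delta>" for n using N by (simp add: Y_def)
    have Yeq: "Y = (\<lambda>n. X (n + N))" by (rule ext) (simp add: Y_def)
    have Y: "Y \<longlonglongrightarrow> 0" unfolding Yeq by (rule LIMSEQ_ignore_initial_segment[OF X])
    define q where "q n y = (u (a + (\<rho> + Y n) *\<^sub>R y) - u (a + \<rho> *\<^sub>R y)) / Y n" for n y
    have qeq: "(M (\<rho> + Y n) - M \<rho>) / Y n = integral (cball 0 1) (q n)" for n
    proof -
      have "\<bar>\<rho> + Y n\<bar> \<le> r" using Ys[of n] by (simp add: \<delta>_def)
      then have "integral (cball 0 1) (\<lambda>y. u (a + (\<rho> + Y n) *\<^sub>R y) - u (a + \<rho> *\<^sub>R y))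
          = M (\<rho> + Y n) - M \<rho>"
        unfolding M_def using uint \<rho> by (intro integral_diff) auto
      then show ?thesis unfolding q_def by (simp add: integral_divide)
    qed
    have qint: "q n integrable_on cball 0 1" for n
    proof -
      have "\<bar>\<rho> + Y n\<bar> \<le> r" using Ys[of n] by (simp add: \<delta>_def)
      then show ?thesis unfolding q_def using uint \<rho>
        by (intro integrable_on_divide integrable_diff) auto
    qed
    have qbound: "norm (q n y) \<le> C" if y: "y \<in> cball 0 1" for n y
    proof -
      have y1: "norm y \<le> 1" using y by simp
      have "\<bar>u ((a + \<rho> *\<^sub>R y) + Y n *\<^sub>R y) - u (a + \<rho> *\<^sub>R y)\<bar> \<le> C * \<bar>Y n\<bar>"
      proof (rule line_bound_abs[where D="\<lambda>s h. dirderiv u h ((a + \<rho> *\<^sub>R y) + s *\<^sub>R y)"])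
        fix s assume s: "\<bar>s\<bar> \<le> \<bar>Y n\<bar>"
        have pt: "(a + \<rho> *\<^sub>R y) + s *\<^sub>R y = a + (\<rho> + s) *\<^sub>R y" by (simp add: algebra_simps)
        have "\<bar>\<rho> + s\<bar> \<le> r" using s Ys[of n] by (simp add: \<delta>_def)
        then have inK: "(a + \<rho> *\<^sub>R y) + s *\<^sub>R y \<in> cball a r" unfolding pt using inS y1 by blast
        show "(u has_derivative (\<lambda>h. dirderiv u h ((a + \<rho> *\<^sub>R y) + s *\<^sub>R y))) (at ((a + \<rho> *\<^sub>R y) + s *\<^sub>R y))"
          using Ck_on_Suc_D[OF u1] inK sub by blast
        fix w :: 'a assume w: "norm w = norm y"
        have "\<bar>dirderiv u w ((a + \<rho> *\<^sub>R y) + s *\<^sub>R y)\<bar> \<le> C * norm w" using C(2)[OF inK] .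
        also have "\<dots> \<le> C" using w y1 C(1) by (simp add: mult_left_le)
        finally show "\<bar>dirderiv u w ((a + \<rho> *\<^sub>R y) + s *\<^sub>R y)\<bar> \<le> C" .
      qed
      then show ?thesis using Y0[of n]
        by (simp add: q_def abs_divide divide_le_eq algebra_simps)
    qed
    have qconv: "(\<lambda>n. q n y) \<longlonglongrightarrow> g0 y" if y: "y \<in> cball 0 1" for y
    proof -
      have inK: "a + \<rho> *\<^sub>R y \<in> cball a r" using inS \<rho> y by simp
      have dd: "(u has_derivative (\<lambda>h. dirderiv u h (a + \<rho> *\<^sub>R y))) (at ((a + \<rho> *\<^sub>R y) + 0 *\<^sub>R y))"
        using Ck_on_Suc_D[OF u1] inK sub by auto
      have "((\<lambda>s. u ((a + \<rho> *\<^sub>R y) + s *\<^sub>R y)) has_real_derivative g0 y) (at 0)"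
        using line_deriv[OF dd] by (simp add: g0_def)
      then have "(\<lambda>h. (u ((a + \<rho> *\<^sub>R y) + h *\<^sub>R y) - u (a + \<rho> *\<^sub>R y)) / h) \<midarrow>0\<rightarrow> g0 y"
        unfolding DERIV_def by simp
      then have "(\<lambda>n. (u ((a + \<rho> *\<^sub>R y) + Y n *\<^sub>R y) - u (a + \<rho> *\<^sub>R y)) / Y n) \<longlonglongrightarrow> g0 y"
        using Y Y0 unfolding LIMSEQ_SEQ_conv[symmetric] by blast
      then show ?thesis by (simp add: q_def algebra_simps)
    qed
    have "(\<lambda>n. integral (cball 0 1) (q n)) \<longlonglongrightarrow> integral (cball 0 1) g0"
      using dominated_convergence(2)[OF qint integrable_on_const[OF lmeasurable_cball] qbound qconv] .
    then have "(\<lambda>n. (M (\<rho> + X (n + N)) - M \<rho>) / X (n + N)) \<longlonglongrightarrow> integral (cball 0 1) g0"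
      using qeq by (simp add: Y_def)
    then show "(\<lambda>n. (M (\<rho> + X n) - M \<rho>) / X n) \<longlonglongrightarrow> integral (cball 0 1) g0"
      by (rule LIMSEQ_offset)
  qed
  then show ?thesis unfolding DERIV_def M_def g0_def by simp
qed


lemma submean:
  fixes u :: "'a::euclidean_space \<Rightarrow> real"
  assumes S: "open S" and u2: "Ck_on 2 S u"
    and lap: "\<And>x. x \<in> S \<Longrightarrow> (\<Sum>c\<in>Basis. dirderiv (dirderiv u c) c x) \<ge> 0"
    and sub: "cball a (2*r) \<subseteq> S" and \<rho>: "0 < \<rho>" "\<rho> < r"
  shows "u a * measure lebesgue (cball a \<rho>) \<le> integral (cball a \<rho>) u"
proof -
  have u2': "Ck_on (Suc (Suc 0)) S u" using u2 by (simp add: numeral_2_eq_2)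
  have u1: "Ck_on (Suc 0) S u" using Ck_on_mono[OF u2'] .
  have sub1: "cball a r \<subseteq> S"
  proof -
    have "cball a r \<subseteq> cball a (2*r)" using \<rho> by (intro subset_cball) auto
    then show ?thesis using sub by blast
  qed
  define M where "M s = integral (cball 0 1) (\<lambda>y. u (a + s *\<^sub>R y))" for s
  have "M 0 \<le> M \<rho>"
  proof (rule DERIV_nonneg_imp_nondecreasing[of 0 \<rho> M])
    show "0 \<le> \<rho>" using \<rho> by simp
    fix x assume x: "0 \<le> x" "x \<le> \<rho>"
    have "(M has_real_derivative integral (cball 0 1) (\<lambda>y. dirderiv u y (a + x *\<^sub>R y))) (at x)"
      unfolding M_def by (rule M_deriv[OF S u1 sub1]) (use x \<rho> in simp)
    moreover have "integral (cball 0 1) (\<lambda>y. dirderiv u y (a + x *\<^sub>R y)) \<ge> 0"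
      by (rule ibp_ball[OF S u2 sub lap]) (use x \<rho> in auto)
    ultimately show "\<exists>y. (M has_real_derivative y) (at x) \<and> 0 \<le> y" by blast
  qed
  moreover have "M 0 = u a * measure lebesgue (cball (0::'a) 1)"
    unfolding M_def lmeasure_integral[OF lmeasurable_cball]
    using integral_mult_right[of "cball (0::'a) 1" "u a" "\<lambda>x. 1"] by simp
  moreover have "M \<rho> = integral (cball a \<rho>) u / \<rho> ^ DIM('a)"
  proof -
    have "continuous_on (cball a \<rho>) u"
      using Ck_on_cont[OF u1] sub1 \<rho> continuous_on_subset[of S u "cball a \<rho>"] by (meson subset_cball less_imp_le order_trans)
    then have "u integrable_on cball a \<rho>" by (rule cont_int_cball)
    from scale_cball[OF \<rho>(1) this] show ?thesis unfolding M_def by (rule integral_unique)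
  qed
  moreover have "measure lebesgue (cball (0::'a) 1) = measure lebesgue (cball a \<rho>) / \<rho> ^ DIM('a)"
  proof -
    have "(\<lambda>x::'a. 1::real) integrable_on cball a \<rho>" by (rule integrable_on_const[OF lmeasurable_cball])
    from integral_unique[OF scale_cball[OF \<rho>(1) this]] show ?thesis
      by (simp add: lmeasure_integral[OF lmeasurable_cball])
  qed
  ultimately have "u a * (measure lebesgue (cball a \<rho>) / \<rho> ^ DIM('a)) \<le> integral (cball a \<rho>) u / \<rho> ^ DIM('a)"
    by simp
  then have le: "u a * measure lebesgue (cball a \<rho>) / \<rho> ^ DIM('a) \<le> integral (cball a \<rho>) u / \<rho> ^ DIM('a)"
    by (simp only: times_divide_eq_right)
  moreover have "\<rho> ^ DIM('a) > 0" using \<rho> by simp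
  ultimately show ?thesis using divide_le_cancel by blast
qed


lemma main_A:
  fixes f :: "complex^'n::finite \<Rightarrow> complex"
  assumes f3: "Ck_on 3 (ball 0 1) f"
    and hyp: "\<forall>z\<in>ball 0 1. Re (\<Sum>k\<in>UNIV.
            cnj (wz k f z) * wz k (laplacian f) z + cnj (wzbar k f z) * wzbar k (laplacian f) z) \<ge> 0"
  defines "U \<equiv> \<lambda>z. \<Sum>b\<in>Basis. (Re (dirderiv f b z))\<^sup>2 + (Im (dirderiv f b z))\<^sup>2"
  shows "Ck_on 2 (ball 0 1) U"
    and "\<And>x. x \<in> ball 0 1 \<Longrightarrow> (\<Sum>c\<in>Basis. dirderiv (dirderiv U c) c x) \<ge> 0"
    and "\<And>z. (normD f z)\<^sup>2 = U z / 2"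
proof -
  let ?S = "ball (0::complex^'n) 1"
  have S: "open ?S" by simp
  have f3': "Ck_on (Suc 2) ?S f" using f3 by simp
  have f2: "Ck_on 2 ?S f" using Ck_on_mono[OF f3'] .
  have f2': "Ck_on (Suc (Suc 0)) ?S f" using f2 by (simp add: numeral_2_eq_2)
  have \<phi>2: "Ck_on 2 ?S (dirderiv f b)" for b using Ck_on_dir[OF S f3'] .
  have \<phi>1: "Ck_on (Suc 0) ?S (dirderiv f b)" for b using Ck_on_dir[OF S f2'] .
  have P2: "Ck_on 2 ?S (\<lambda>z. Re (dirderiv f b z))" "Ck_on 2 ?S (\<lambda>z. Im (dirderiv f b z))" for b
    using Ck_on_linear[OF bounded_linear_Re \<phi>2] Ck_on_linear[OF bounded_linear_Im \<phi>2] by auto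
  have sq: "Ck_on 2 ?S (\<lambda>z. (g z)\<^sup>2)" if "Ck_on 2 ?S g" for g :: "complex^'n \<Rightarrow> real"
    using Ck_on_mult[OF that that] by (simp add: power2_eq_square)
  show "Ck_on 2 ?S U" unfolding U_def
    by (rule Ck_on_sum) (use Ck_on_add[OF sq[OF P2(1)] sq[OF P2(2)]] in auto)
  show "(normD f z)\<^sup>2 = U z / 2" for z
  proof -
    have "(normD f z)\<^sup>2 = (\<Sum>k\<in>UNIV. (cmod (wz k f z))\<^sup>2 + (cmod (wzbar k f z))\<^sup>2)"
      unfolding normD_def by (rule real_sqrt_pow2) (auto intro: sum_nonneg)
    also have "\<dots> = (\<Sum>k\<in>UNIV. ((Re (dirderiv f (axis k 1) z))\<^sup>2 + (Im (dirderiv f (axis k 1) z))\<^sup>2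
        + ((Re (dirderiv f (axis k \<i>) z))\<^sup>2 + (Im (dirderiv f (axis k \<i>) z))\<^sup>2)) / 2)"
      unfolding wz_def wzbar_def by (simp only: alg_norm)
    also have "\<dots> = U z / 2"
      unfolding U_def sum_Basis_cvec sum_divide_distrib by simp
    finally show ?thesis .
  qed
  define Lf where "Lf = (\<lambda>z. \<Sum>c\<in>Basis. dirderiv (dirderiv f c) c z)"
  have lap: "laplacian f z = Lf z" if z: "z \<in> ?S" for z
  proof -
    have "4 * wz k (wzbar k f) z = dirderiv (dirderiv f (axis k 1)) (axis k 1) z + dirderiv (dirderiv f (axis k \<i>)) (axis k \<i>) z" for k
    proof -
      have wzb: "wzbar k f = (\<lambda>z. (dirderiv f (axis k 1) z + \<i> * dirderiv f (axis k \<i>) z) / 2)"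
        by (rule ext) (simp add: wzbar_def)
      have dv: "dirderiv (wzbar k f) v z = (dirderiv (dirderiv f (axis k 1)) v z + \<i> * dirderiv (dirderiv f (axis k \<i>)) v z) / 2" for v
        unfolding wzb by (rule dirderiv_comb) (use Ck_diff[OF \<phi>1 z] in auto)
      have sw: "dirderiv (dirderiv f (axis k \<i>)) (axis k 1) z = dirderiv (dirderiv f (axis k 1)) (axis k \<i>) z"
        using schwarz_Ck[OF S f2 z] .
      show ?thesis unfolding wz_def[of k "wzbar k f"] dv sw
        by (simp add: algebra_simps) (simp add: field_simps)
    qed
    then show ?thesis unfolding laplacian_def Lf_def sum_Basis_cvec by simp
  qed
  have dlap: "dirderiv (laplacian f) v z = dirderiv Lf v z" if z: "z \<in> ?S" for z v
    by (rule dirderiv_cong[OF S z lap])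
  show "(\<Sum>c\<in>Basis. dirderiv (dirderiv U c) c x) \<ge> 0" if x: "x \<in> ?S" for x
  proof -
    have h: "Re (\<Sum>k\<in>UNIV. cnj (wz k f x) * wz k (laplacian f) x + cnj (wzbar k f x) * wzbar k (laplacian f) x)
       = (\<Sum>b\<in>Basis. Re (cnj (dirderiv f b x) * dirderiv Lf b x)) / 2"
      unfolding wz_def wzbar_def dlap[OF x] alg_hyp sum_Basis_cvec
      by (simp add: Re_sum sum_divide_distrib)
    have "(\<Sum>c\<in>Basis. dirderiv (dirderiv U c) c x)
      = 2 * (\<Sum>b\<in>Basis. \<Sum>c\<in>Basis. (cmod (dirderiv (dirderiv f b) c x))\<^sup>2)
      + 2 * (\<Sum>b\<in>Basis. Re (cnj (dirderiv f b x) * dirderiv Lf b x))"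
      unfolding U_def Lf_def by (rule lap_U[OF S f3 x])
    moreover have "(\<Sum>b\<in>Basis. Re (cnj (dirderiv f b x) * dirderiv Lf b x)) \<ge> 0"
    proof -
      have "Re (\<Sum>k\<in>UNIV. cnj (wz k f x) * wz k (laplacian f) x + cnj (wzbar k f x) * wzbar k (laplacian f) x) \<ge> 0"
        using hyp x by blast
      then show ?thesis unfolding h by simp
    qed
    moreover have "(\<Sum>b\<in>Basis. \<Sum>c\<in>Basis. (cmod (dirderiv (dirderiv f b) c x))\<^sup>2) \<ge> 0"
      by (intro sum_nonneg) auto
    ultimately show ?thesis by simp
  qed
qed


lemma tangent_powr:
  fixes p A t :: real
  assumes p: "p \<ge> 1" and A: "A > 0" and t: "t \<ge> 0"
  shows "A powr p + p * A powr (p - 1) * (t - A) \<le> t powr p"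
proof (cases "t = 0")
  case True
  have "A powr (p - 1) * A = A powr p" using A by (simp add: powr_diff)
  then have "A powr p + p * A powr (p - 1) * (t - A) = (1 - p) * A powr p"
    using True by (simp add: algebra_simps)
  also have "\<dots> \<le> 0" using p by (simp add: mult_nonpos_nonneg)
  finally show ?thesis using True by simp
next
  case False
  then have tp: "t > 0" using t by simp
  have "p * A powr (p - 1) * (t - A) \<le> t powr p - A powr p"
  proof (rule convex_on_imp_above_tangent[OF powr_convex[OF p]])
    show "connected {0::real<..}" by simp
    show "A \<in> interior {0<..}" using A by (simp add: interior_open)
    show "t \<in> {0<..}" using tp by simp
    show "((\<lambda>x. x powr p) has_real_derivative p * A powr (p - 1)) (at A within {0<..})"
      using has_real_derivative_powr[OF A] by (rule has_field_derivative_at_within)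
  qed
  then show ?thesis by simp
qed

lemma powr_sq_half:
  fixes x \<alpha> :: real
  assumes "x \<ge> 0"
  shows "(x\<^sup>2) powr (\<alpha> / 2) = x powr \<alpha>"
proof (cases "x = 0")
  case True then show ?thesis by simp
next
  case False
  then have "x > 0" using assms by simp
  then have "x powr (real 2) = x ^ 2" by (rule powr_realpow)
  then have "x\<^sup>2 = x powr 2" by simp
  then have "(x\<^sup>2) powr (\<alpha> / 2) = x powr (2 * (\<alpha> / 2))" by (simp add: powr_powr)
  then show ?thesis by simp
qed

lemma measure_cball_pos:
  fixes a :: "'a::euclidean_space"
  assumes "r > 0"
  shows "measure lebesgue (cball a r) > 0"
proof -
  have "measure lebesgue (cball a r) = measure lborel (cball a r)"
    by (rule measure_completion) simp
  also have "\<dots> = measure lborel (ball a r)" by (rule content_cball_conv_ball)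
  also have "\<dots> > 0" using content_ball_pos[OF assms] .
  finally show ?thesis .
qed

lemma cont_usc:
  fixes g :: "'a::topological_space \<Rightarrow> real"
  assumes "continuous_on S g"
  shows "usc_on S g"
  unfolding usc_on_def
proof (intro ballI allI impI)
  fix x c assume x: "x \<in> S" and c: "g x < c"
  have "(g \<longlongrightarrow> g x) (at x within S)" using assms x continuous_on_def by blast
  then show "\<forall>\<^sub>F y in at x within S. g y < c" using c order_tendstoD(2) by blast
qed

theorem lemma2p3:
  fixes f :: "complex^'n::finite \<Rightarrow> complex"
  assumes "Ck_on 3 (ball 0 1) f"
    and "\<forall>z\<in>ball 0 1. Re (\<Sum>k\<in>UNIV.
            cnj (wz k f z) * wz k (laplacian f) z + cnj (wzbar k f z) * wzbar k (laplacian f) z) \<ge> 0"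
  shows "\<forall>\<alpha>::real. \<alpha> \<ge> 2 \<longrightarrow> subharmonic_on (ball 0 1) (\<lambda>z. normD f z powr \<alpha>)"
proof -
  let ?S = "ball (0::complex^'n) 1"
  define U where "U = (\<lambda>z. \<Sum>b\<in>Basis. (Re (dirderiv f b z))\<^sup>2 + (Im (dirderiv f b z))\<^sup>2)"
  have U2: "Ck_on 2 ?S U" using main_A(1)[OF assms] unfolding U_def .
  have Ulap: "\<And>x. x \<in> ?S \<Longrightarrow> (\<Sum>c\<in>Basis. dirderiv (dirderiv U c) c x) \<ge> 0"
    using main_A(2)[OF assms] unfolding U_def by blast
  have Unorm: "(normD f z)\<^sup>2 = U z / 2" for z using main_A(3)[OF assms] unfolding U_def by blast
  have Unn: "U z \<ge> 0" for z by (simp add: U_def sum_nonneg)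
  have nDnn: "normD f z \<ge> 0" for z by (simp add: normD_def sum_nonneg)
  have nD: "normD f z = sqrt (U z / 2)" for z
    using real_sqrt_unique[OF Unorm nDnn] by simp
  have Ucont: "continuous_on ?S U" using Ck_on_cont[OF U2] .
  have nDcont: "continuous_on ?S (normD f)"
  proof -
    have "continuous_on ?S (\<lambda>z. sqrt (U z / 2))" by (intro continuous_intros Ucont) auto
    then show ?thesis using nD by simp
  qed
  show ?thesis
  proof (intro allI impI)
    fix \<alpha> :: real assume \<alpha>: "\<alpha> \<ge> 2"
    define \<phi> where "\<phi> z = normD f z powr \<alpha>" for z
    have \<phi>fun: "(\<lambda>z. normD f z powr \<alpha>) = \<phi>" by (rule ext) (simp add: \<phi>_def)
    define u0 where "u0 z = U z / 2" for z
    define p where "p = \<alpha> / 2"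
    have p: "p \<ge> 1" using \<alpha> by (simp add: p_def)
    have \<phi>_eq: "\<phi> z = u0 z powr p" for z
      unfolding \<phi>_def u0_def p_def Unorm[symmetric] using powr_sq_half[OF nDnn] by simp
    have \<phi>c: "continuous_on ?S \<phi>"
      unfolding \<phi>_def by (rule continuous_on_powr'[OF nDcont continuous_on_const]) (use \<alpha> nDnn in auto)
    have \<phi>nn: "\<phi> z \<ge> 0" for z by (simp add: \<phi>_def)
    have u0nn: "u0 z \<ge> 0" for z using Unn by (simp add: u0_def)
    show "subharmonic_on ?S (\<lambda>z. normD f z powr \<alpha>)"
      unfolding subharmonic_on_def
    proof (intro conjI ballI)
      show "usc_on ?S (\<lambda>z. normD f z powr \<alpha>)" unfolding \<phi>fun by (rule cont_usc[OF \<phi>c])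
      fix a assume a: "a \<in> ?S"
      obtain e where e: "e > 0" "ball a e \<subseteq> ?S" using a open_contains_ball open_ball by blast
      show "\<exists>r0>0. \<forall>r. 0 < r \<and> r < r0 \<longrightarrow> cball a r \<subseteq> ?S \<and> (\<lambda>z. normD f z powr \<alpha>) integrable_on cball a r \<and>
          normD f a powr \<alpha> \<le> integral (cball a r) (\<lambda>z. normD f z powr \<alpha>) / measure lebesgue (cball a r)"
      proof (intro exI[of _ "e/4"] conjI allI impI)
        show "e / 4 > 0" using e by simp
        fix r assume r: "0 < r \<and> r < e / 4"
        have cbS: "cball a r \<subseteq> ?S"
        proof -
          have "cball a r \<subseteq> ball a e" using r by (auto simp: mem_cball mem_ball)
          then show ?thesis using e by blast
        qed
        show "cball a r \<subseteq> ?S" by (rule cbS)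
        have \<phi>int: "\<phi> integrable_on cball a r" by (rule cont_int_cball) (rule continuous_on_subset[OF \<phi>c cbS])
        show "(\<lambda>z. normD f z powr \<alpha>) integrable_on cball a r" unfolding \<phi>fun by (rule \<phi>int)
        have sub2: "cball a (2 * (e/4)) \<subseteq> ?S"
        proof -
          have "cball a (2 * (e/4)) \<subseteq> ball a e" using e by (auto simp: mem_cball mem_ball)
          then show ?thesis using e by blast
        qed
        define m where "m = measure lebesgue (cball a r)"
        have mpos: "m > 0" unfolding m_def using measure_cball_pos r by blast
        have sm: "U a * m \<le> integral (cball a r) U"
          unfolding m_def by (rule submean[OF open_ball U2 Ulap sub2]) (use r in auto)
        have Uint: "U integrable_on cball a r" by (rule cont_int_cball) (rule continuous_on_subset[OF Ucont cbS])
        define I0 where "I0 = integral (cball a r) u0"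
        have u0I: "(u0 has_integral I0) (cball a r)"
        proof -
          have "((\<lambda>z. U z / 2) has_integral integral (cball a r) U / 2) (cball a r)"
            using has_integral_divide[OF integrable_integral[OF Uint]] .
          then show ?thesis unfolding I0_def u0_def using integral_unique by (metis (no_types) u0_def)
        qed
        have I0U: "I0 = integral (cball a r) U / 2"
        proof -
          have "((\<lambda>z. U z / 2) has_integral integral (cball a r) U / 2) (cball a r)"
            using has_integral_divide[OF integrable_integral[OF Uint]] .
          then show ?thesis unfolding I0_def u0_def by (rule integral_unique)
        qed
        define Av where "Av = I0 / m"
        have ua: "u0 a \<le> Av"
        proof -
          have "u0 a * m \<le> I0" using sm unfolding u0_def I0U by simp
          then show ?thesis unfolding Av_def using mpos by (simp add: pos_le_divide_eq)
        qed
        have Av0: "Av \<ge> 0" using ua u0nn[of a] by linarith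
        have "\<phi> a \<le> integral (cball a r) \<phi> / m"
        proof (cases "Av = 0")
          case True
          then have "u0 a = 0" using ua u0nn[of a] by linarith
          then have "\<phi> a = 0" using \<phi>_eq[of a] by simp
          moreover have "integral (cball a r) \<phi> \<ge> 0" by (rule integral_nonneg[OF \<phi>int]) (simp add: \<phi>nn)
          ultimately show ?thesis using mpos by simp
        next
          case False
          then have Avp: "Av > 0" using Av0 by simp
          define c where "c = p * Av powr (p - 1)"
          define lin where "lin y = Av powr p * 1 + c * (u0 y - Av * 1)" for y
          have h1: "((\<lambda>y. 1) has_integral m) (cball a r)"
            unfolding m_def lmeasure_integral[OF lmeasurable_cball]
            by (rule integrable_integral[OF integrable_on_const[OF lmeasurable_cball]])
          have linI: "(lin has_integral (Av powr p * m + c * (I0 - Av * m))) (cball a r)"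
            unfolding lin_def
            by (intro has_integral_add has_integral_mult_right has_integral_diff h1 u0I)
          have "Av * m = I0" unfolding Av_def using mpos by simp
          then have linI': "(lin has_integral (Av powr p * m)) (cball a r)" using linI by simp
          have "Av powr p * m \<le> integral (cball a r) \<phi>"
          proof (rule has_integral_le[OF linI' integrable_integral[OF \<phi>int]])
            fix y assume "y \<in> cball a r"
            show "lin y \<le> \<phi> y" unfolding lin_def c_def \<phi>_eq using tangent_powr[OF p Avp u0nn[of y]] by simp
          qed
          then have "Av powr p \<le> integral (cball a r) \<phi> / m" using mpos by (simp add: pos_le_divide_eq)
          moreover have "\<phi> a \<le> Av powr p" unfolding \<phi>_eq using p ua u0nn[of a] by (intro powr_mono2) auto
          ultimately show ?thesis by linarith
        qed
        then show "normD f a powr \<alpha> \<le> integral (cball a r) (\<lambda>z. normD f z powr \<alpha>) / measure lebesgue (cball a r)"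
          unfolding \<phi>fun m_def by (simp add: \<phi>_def)
      qed
    qed
  qed
qed


end
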